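(* Let $(F,v)$ be a valued field and $\varepsilon\in\Gamma$ with $0\le\varepsilon<v(2)$. Then $W_q(F)_\varepsilon$ is the subgroup of $W_q(F)$ generated by the Witt classes of the quadratic forms $[a,b]$ with $a,b\in F$ and $v(a)+v(b)\ge-2\varepsilon$. (Each such form is nonsingular.)
   Context: $F$ is a field with valuation $v\colon F\to\Gamma\cup\{\infty\}$, $\Gamma$ divisible totally ordered abelian group; $v(2)=\infty$ iff $\operatorname{char}F=2$. For $a,b\in F$, $[a,b]$ denotes the quadratic form on $F^2$ given by $(x_1,x_2)\mapsto ax_1^2+x_1x_2+bx_2^2$. $W_q(F)$ is the Witt group of nonsingular quadratic forms (polar form nondegenerate). A $v$-norm on a finite-dimensional $F$-space $V$ is $\alpha\colon V\to\Gamma\cup\{\infty\}$ with $\alpha(x)=\infty\iff x=0$, $\alpha(\lambda x)=v(\lambda)+\alpha(x)$, $\alpha(x+y)\ge\min(\alpha(x),\alpha(y))$, admitting a basis $(e_i)$ with $\alpha(\sum\lambda_ie_i)=\min\alpha(\lambda_ie_i)$. For $\varepsilon\ge0$, $\alpha$ is compatible of depth $\varepsilon$ with a quadratic form $q$ with polar form $b_q$ if (a) $v(b_q(x,y))\ge\alpha(x)+\alpha(y)+\varepsilon$; (b) $v(q(x))\ge2\alpha(x)$; (c) for every $x\neq0$ there is $y\neq0$ with $v(b_q(x,y))=\alpha(x)+\alpha(y)+\varepsilon$. $W_q(F)_\varepsilon$ is the set of Witt classes represented by a nonsingular quadratic space admitting a compatible $v$-norm of some depth $\gamma\le\varepsilon$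 (this is a subgroup). *)

theory Defs
  imports Main
begin

text \<open>A valuation on the field 'a with values in the totally ordered
abelian group 'g is a map v :: 'a => 'g that is only meaningful on nonzero elements;
the value v 0 = infinity is encoded by always guarding with "x = 0".
Finite-dimensional quadratic spaces are represented in coordinates: a pair (n, Q)
where Q is a quadratic form on the coordinate space F^n, realised as the set of
functions nat => 'a vanishing outside {..<n}.\<close>

definition valuation :: "('a::field \<Rightarrow> 'g::linordered_ab_group_add) \<Rightarrow> bool" where
  "valuation v \<longleftrightarrow>
     (\<forall>x y. x \<noteq> 0 \<and> y \<noteq> 0 \<longrightarrow> v (x * y) = v x + v y) \<and>
     (\<forall>x y. x \<noteq> 0 \<and> y \<noteq> 0 \<and> x + y \<noteq> 0 \<longrightarrow> min (v x) (v y) \<le> v (x + y))"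

definition divisible_group :: "'g::linordered_ab_group_add set \<Rightarrow> bool" where
  "divisible_group G \<longleftrightarrow> (\<forall>g\<in>G. \<forall>n::nat. n > 0 \<longrightarrow> (\<exists>h\<in>G. (\<Sum>i<n. h) = g))"

type_synonym 'a qspace = "nat \<times> ((nat \<Rightarrow> 'a) \<Rightarrow> 'a)"

definition vecs :: "nat \<Rightarrow> (nat \<Rightarrow> 'a::zero) set" where
  "vecs n = {x. \<forall>i\<ge>n. x i = 0}"

definition vadd :: "(nat \<Rightarrow> 'a::field) \<Rightarrow> (nat \<Rightarrow> 'a) \<Rightarrow> nat \<Rightarrow> 'a" where
  "vadd x y = (\<lambda>i. x i + y i)"

definition vscale :: "'a::field \<Rightarrow> (nat \<Rightarrow> 'a) \<Rightarrow> nat \<Rightarrow> 'a" where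
  "vscale c x = (\<lambda>i. c * x i)"

definition polar :: "((nat \<Rightarrow> 'a::field) \<Rightarrow> 'a) \<Rightarrow> (nat \<Rightarrow> 'a) \<Rightarrow> (nat \<Rightarrow> 'a) \<Rightarrow> 'a" where
  "polar Q x y = Q (vadd x y) - Q x - Q y"

definition is_qform :: "'a::field qspace \<Rightarrow> bool" where
  "is_qform S \<longleftrightarrow> (case S of (n, Q) \<Rightarrow>
     (\<forall>x\<in>vecs n. \<forall>c. Q (vscale c x) = c^2 * Q x) \<and>
     (\<forall>x\<in>vecs n. \<forall>y\<in>vecs n. \<forall>z\<in>vecs n.
        polar Q (vadd x y) z = polar Q x z + polar Q y z) \<and>
     (\<forall>x\<in>vecs n. \<forall>y\<in>vecs n. \<forall>c. polar Q (vscale c x) y = c * polar Q x y))"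

definition nonsingular :: "'a::field qspace \<Rightarrow> bool" where
  "nonsingular S \<longleftrightarrow> is_qform S \<and> (case S of (n, Q) \<Rightarrow>
     (\<forall>x\<in>vecs n. (\<forall>y\<in>vecs n. polar Q x y = 0) \<longrightarrow> x = (\<lambda>_. 0)))"

definition isometric :: "'a::field qspace \<Rightarrow> 'a qspace \<Rightarrow> bool" where
  "isometric S T \<longleftrightarrow> (case S of (n, Q) \<Rightarrow> case T of (m, R) \<Rightarrow>
     (\<exists>f. bij_betw f (vecs n) (vecs m) \<and>
          (\<forall>x\<in>vecs n. \<forall>y\<in>vecs n. f (vadd x y) = vadd (f x) (f y)) \<and>
          (\<forall>x\<in>vecs n. \<forall>c. f (vscale c x) = vscale c (f x)) \<and>
          (\<forall>x\<in>vecs n. R (f x) = Q x)))"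

definition osum :: "'a::field qspace \<Rightarrow> 'a qspace \<Rightarrow> 'a qspace" where
  "osum S T = (case S of (n, Q) \<Rightarrow> case T of (m, R) \<Rightarrow>
     (n + m, \<lambda>x. Q (\<lambda>i. if i < n then x i else 0) + R (\<lambda>i. if i < m then x (n + i) else 0)))"

definition hyp :: "nat \<Rightarrow> 'a::field qspace" where
  "hyp k = (2 * k, \<lambda>x. \<Sum>i<k. x (2 * i) * x (2 * i + 1))"

definition witt_equiv :: "'a::field qspace \<Rightarrow> 'a qspace \<Rightarrow> bool" where
  "witt_equiv S T \<longleftrightarrow> (\<exists>k l. isometric (osum S (hyp k)) (osum T (hyp l)))"

definition binf :: "'a::field \<Rightarrow> 'a \<Rightarrow> 'a qspace" where
  "binf a b = (2, \<lambda>x. a * (x 0)^2 + x 0 * x 1 + b * (x 1)^2)"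

definition zero_space :: "'a::field qspace" where
  "zero_space = (0, \<lambda>_. 0)"

fun sum_binf :: "('a::field \<times> 'a) list \<Rightarrow> 'a qspace" where
  "sum_binf [] = zero_space"
| "sum_binf ((a, b) # ps) = osum (binf a b) (sum_binf ps)"

text \<open>v-norm on F^n (alpha is only meaningful on nonzero vectors; alpha 0 = infinity).
The splitting basis e is encoded by bijectivity of the coordinate map.\<close>
definition vnorm :: "('a::field \<Rightarrow> 'g::linordered_ab_group_add) \<Rightarrow> nat \<Rightarrow> ((nat \<Rightarrow> 'a) \<Rightarrow> 'g) \<Rightarrow> bool" where
  "vnorm v n \<alpha> \<longleftrightarrow>
     (\<forall>c. \<forall>x\<in>vecs n. c \<noteq> 0 \<and> x \<noteq> (\<lambda>_. 0) \<longrightarrow> \<alpha> (vscale c x) = v c + \<alpha> x) \<and>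
     (\<forall>x\<in>vecs n. \<forall>y\<in>vecs n. x \<noteq> (\<lambda>_. 0) \<and> y \<noteq> (\<lambda>_. 0) \<and> vadd x y \<noteq> (\<lambda>_. 0)
        \<longrightarrow> min (\<alpha> x) (\<alpha> y) \<le> \<alpha> (vadd x y)) \<and>
     (\<exists>e :: nat \<Rightarrow> nat \<Rightarrow> 'a.
        (\<forall>i<n. e i \<in> vecs n) \<and>
        bij_betw (\<lambda>c. \<lambda>j. \<Sum>i<n. c i * e i j) (vecs n) (vecs n) \<and>
        (\<forall>c\<in>vecs n. c \<noteq> (\<lambda>_. 0) \<longrightarrow>
           \<alpha> (\<lambda>j. \<Sum>i<n. c i * e i j) = Min {v (c i) + \<alpha> (e i) | i. i < n \<and> c i \<noteq> 0}))"

definition compatible :: "('a::field \<Rightarrow> 'g::linordered_ab_group_add) \<Rightarrow> 'a qspace \<Rightarrow> ((nat \<Rightarrow> 'a) \<Rightarrow> 'g) \<Rightarrow> 'g \<Rightarrow> bool" where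
  "compatible v S \<alpha> \<gamma> \<longleftrightarrow> 0 \<le> \<gamma> \<and> (case S of (n, Q) \<Rightarrow>
     vnorm v n \<alpha> \<and>
     (\<forall>x\<in>vecs n. \<forall>y\<in>vecs n. x \<noteq> (\<lambda>_. 0) \<and> y \<noteq> (\<lambda>_. 0) \<and> polar Q x y \<noteq> 0
        \<longrightarrow> \<alpha> x + \<alpha> y + \<gamma> \<le> v (polar Q x y)) \<and>
     (\<forall>x\<in>vecs n. x \<noteq> (\<lambda>_. 0) \<and> Q x \<noteq> 0 \<longrightarrow> \<alpha> x + \<alpha> x \<le> v (Q x)) \<and>
     (\<forall>x\<in>vecs n. x \<noteq> (\<lambda>_. 0) \<longrightarrow>
        (\<exists>y\<in>vecs n. y \<noteq> (\<lambda>_. 0) \<and> polar Q x y \<noteq> 0 \<and> v (polar Q x y) = \<alpha> x + \<alpha> y + \<gamma>)))"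

definition in_W_eps :: "('a::field \<Rightarrow> 'g::linordered_ab_group_add) \<Rightarrow> 'g \<Rightarrow> 'a qspace \<Rightarrow> bool" where
  "in_W_eps v \<epsilon> S \<longleftrightarrow> (\<exists>T \<alpha> \<gamma>. nonsingular T \<and> witt_equiv S T \<and> \<gamma> \<le> \<epsilon> \<and> compatible v T \<alpha> \<gamma>)"

definition gen_cond :: "('a::field \<Rightarrow> 'g::linordered_ab_group_add) \<Rightarrow> 'g \<Rightarrow> 'a \<Rightarrow> 'a \<Rightarrow> bool" where
  "gen_cond v \<epsilon> a b \<longleftrightarrow> a = 0 \<or> b = 0 \<or> - (\<epsilon> + \<epsilon>) \<le> v a + v b"

text \<open>The Witt class of S lies in the subgroup generated by the classes of the
[a,b] with gen_cond: [S] = sum over P minus sum over N, i.e. S + sum N ~ sum P.\<close>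
definition in_generated :: "('a::field \<Rightarrow> 'g::linordered_ab_group_add) \<Rightarrow> 'g \<Rightarrow> 'a qspace \<Rightarrow> bool" where
  "in_generated v \<epsilon> S \<longleftrightarrow> (\<exists>P N. (\<forall>(a, b)\<in>set P. gen_cond v \<epsilon> a b) \<and> (\<forall>(a, b)\<in>set N. gen_cond v \<epsilon> a b) \<and>
      witt_equiv (osum S (sum_binf N)) (sum_binf P))"

end

theory Submission
  imports Defs
begin


lemma val_mult: "valuation v \<Longrightarrow> x \<noteq> 0 \<Longrightarrow> y \<noteq> 0 \<Longrightarrow> v (x*y) = v x + v y"
  unfolding valuation_def by blast

lemma val_add: "valuation v \<Longrightarrow> x \<noteq> 0 \<Longrightarrow> y \<noteq> 0 \<Longrightarrow> x + y \<noteq> 0 \<Longrightarrow> min (v x) (v y) \<le> v (x+y)"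
  unfolding valuation_def by blast

lemma val_one: "valuation v \<Longrightarrow> v 1 = 0"
  using val_mult[of v 1 1] by simp

lemma val_neg: assumes "valuation v" shows "v (-x) = v x"
proof (cases "x = 0")
  case True then show ?thesis by simp
next
  case False
  have "v (-1) + v (-1) = 0" using val_mult[OF assms, of "-1" "-1"] val_one[OF assms] by simp
  then have m: "v (-1) = 0"
    by (metis add.right_neutral add_less_cancel_left add_pos_pos less_add_same_cancel1 linorder_neqE not_less_iff_gr_or_eq add_neg_neg)
  have "v (-x) = v ((-1)*x)" by simp
  also have "\<dots> = v x" using val_mult[OF assms, of "-1" x] False m by simp
  finally show ?thesis .
qed

lemma val_inv: "valuation v \<Longrightarrow> x \<noteq> 0 \<Longrightarrow> v (inverse x) = - v x"
  using val_mult[of v x "inverse x"] val_one[of v] by (simp add: eq_neg_iff_add_eq_0 add.commute)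

lemma val_div: "valuation v \<Longrightarrow> x \<noteq> 0 \<Longrightarrow> y \<noteq> 0 \<Longrightarrow> v (x / y) = v x - v y"
  by (simp add: divide_inverse val_mult val_inv)

lemma val_add_ge: assumes "valuation v" "x + y \<noteq> 0" "x \<noteq> 0 \<Longrightarrow> l \<le> v x" "y \<noteq> 0 \<Longrightarrow> l \<le> v y"
  shows "l \<le> v (x+y)"
proof -
  consider "x = 0" | "y = 0" | "x \<noteq> 0" "y \<noteq> 0" by blast
  then show ?thesis
  proof cases
    case 3 then show ?thesis using val_add[OF assms(1) 3 assms(2)] assms(3,4) by (meson min.bounded_iff order_trans)
  qed (use assms in auto)
qed

lemma val_sum_exists: assumes "valuation v" "finite I" "sum f I \<noteq> 0"
  shows "\<exists>i\<in>I. f i \<noteq> 0 \<and> v (f i) \<le> v (sum f I)"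
  using assms(2,3)
proof (induction I rule: finite_induct)
  case empty then show ?case by simp
next
  case (insert a F)
  have s: "sum f (insert a F) = f a + sum f F" using insert by simp
  show ?case
  proof (cases "sum f F = 0")
    case True then show ?thesis using s insert.prems by auto
  next
    case F: False
    show ?thesis
    proof (cases "f a = 0")
      case True then show ?thesis using s insert F by auto
    next
      case False
      have "min (v (f a)) (v (sum f F)) \<le> v (sum f (insert a F))"
        using val_add[OF assms(1) False F] s insert.prems by simp
      then consider "v (f a) \<le> v (sum f (insert a F))" | "v (sum f F) \<le> v (sum f (insert a F))"
        by linarith
      then show ?thesis
      proof cases
        case 1 then show ?thesis using False by auto
      next
        case 2 then obtain i where "i \<in> F" "f i \<noteq> 0" "v (f i) \<le> v (sum f F)" using insert.IH F by blast
        then show ?thesis using 2 by (meson insertCI order_trans)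
      qed
    qed
  qed
qed

lemma val_sum_ge: assumes "valuation v" "finite I" "sum f I \<noteq> 0" "\<And>i. i \<in> I \<Longrightarrow> f i \<noteq> 0 \<Longrightarrow> l \<le> v (f i)"
  shows "l \<le> v (sum f I)"
  using val_sum_exists[OF assms(1-3)] assms(4) by (meson order_trans)

lemma val_diff_eq: assumes "valuation v" "a \<noteq> 0" "u \<noteq> 0 \<Longrightarrow> v a < v u"
  shows "a - u \<noteq> 0 \<and> v (a - u) = v a"
proof (cases "u = 0")
  case True then show ?thesis using assms by simp
next
  case False
  have ne: "a - u \<noteq> 0" using assms False by auto
  have "min (v a) (v (-u)) \<le> v (a + - u)" using val_add[OF assms(1) assms(2), of "-u"] False ne by simp
  then have g: "v a \<le> v (a - u)" using val_neg[OF assms(1), of u] assms(3)[OF False] by simp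
  have "min (v (a-u)) (v u) \<le> v ((a - u) + u)" using val_add[OF assms(1) ne False] assms(2) by simp
  then have "v (a - u) \<le> v a" using assms(3)[OF False] by (simp add: min_def split: if_splits)
  then show ?thesis using g ne by simp
qed



lemma vecs_iff: "x \<in> vecs n \<longleftrightarrow> (\<forall>i\<ge>n. x i = 0)" by (simp add: vecs_def)

lemma vadd_vecs[intro]: "x \<in> vecs n \<Longrightarrow> y \<in> vecs n \<Longrightarrow> vadd x y \<in> vecs n"
  by (simp add: vecs_def vadd_def)
lemma vscale_vecs[intro]: "x \<in> vecs n \<Longrightarrow> vscale c x \<in> vecs n"
  by (simp add: vecs_def vscale_def)
lemma zero_vecs[intro]: "(\<lambda>_. 0) \<in> vecs n" by (simp add: vecs_def)

definition restr :: "nat \<Rightarrow> (nat \<Rightarrow> 'a::zero) \<Rightarrow> nat \<Rightarrow> 'a" where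
  "restr n x = (\<lambda>i. if i < n then x i else 0)"

lemma restr_vecs[intro]: "restr n x \<in> vecs n" by (simp add: restr_def vecs_def)
lemma restr_id: "x \<in> vecs n \<Longrightarrow> restr n x = x" by (auto simp: restr_def vecs_def)

lemma osum_eq: "osum (n,Q) (m,R) = (n+m, \<lambda>x. Q (restr n x) + R (restr m (\<lambda>i. x (n+i))))"
  by (simp add: osum_def restr_def)

lemma if_if_lt[simp]: "(a::nat) \<le> b \<Longrightarrow> (\<lambda>i. if i < a then if i < b then x i else 0 else 0) = (\<lambda>i. if i < a then x i else 0)"
  by (rule ext) auto

lemma osum_assoc: "osum (osum A B) C = osum A (osum B C)"
proof -
  obtain n Q where A: "A = (n,Q)" by (cases A)
  obtain m R where B: "B = (m,R)" by (cases B)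
  obtain k P where C: "C = (k,P)" by (cases C)
  show ?thesis unfolding A B C osum_eq
    by (simp add: restr_def add.assoc)
qed

definition bq :: "'a::field \<Rightarrow> 'a \<Rightarrow> 'a \<Rightarrow> 'a \<Rightarrow> 'a" where
  "bq a b x y = a * x^2 + x * y + b * y^2"

definition sbQ :: "('a::field \<times> 'a) list \<Rightarrow> (nat \<Rightarrow> 'a) \<Rightarrow> 'a" where
  "sbQ L x = (\<Sum>k<length L. bq (fst (L!k)) (snd (L!k)) (x (2*k)) (x (2*k+1)))"

lemma sbQ_restr: "sbQ L (restr (2*length L) x) = sbQ L x"
  unfolding sbQ_def by (intro sum.cong) (auto simp: restr_def)

lemma sum_binf_eq: "sum_binf L = (2 * length L, sbQ L)"
proof (induction L)
  case Nil then show ?case by (simp add: zero_space_def sbQ_def fun_eq_iff)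
next
  case (Cons p L)
  obtain a b where p: "p = (a,b)" by (cases p)
  have "sum_binf (p # L) = osum (binf a b) (2 * length L, sbQ L)" using Cons p by simp
  also have "\<dots> = (2 * length (p#L), sbQ (p#L))"
    unfolding binf_def osum_eq
  proof (simp add: fun_eq_iff, intro allI)
    fix x :: "nat \<Rightarrow> 'a"
    have 1: "sbQ L (restr (2 * length L) (\<lambda>i. x (Suc (Suc i)))) = sbQ L (\<lambda>i. x (Suc (Suc i)))"
      by (rule sbQ_restr)
    show "a * (restr 2 x 0)\<^sup>2 + restr 2 x 0 * restr 2 x (Suc 0) + b * (restr 2 x (Suc 0))\<^sup>2 +
         sbQ L (restr (2 * length L) (\<lambda>i. x (Suc (Suc i)))) = sbQ (p # L) x"
      unfolding 1 unfolding sbQ_def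
      by (simp add: sum.lessThan_Suc_shift p restr_def bq_def del: sum.lessThan_Suc)
  qed
  finally show ?case .
qed

lemma osum_sum_binf: "osum (sum_binf A) (sum_binf B) = sum_binf (A @ B)"
proof (induction A)
  case Nil
  show ?case unfolding sum_binf_eq zero_space_def[symmetric]
    by (simp add: zero_space_def osum_eq sbQ_restr sbQ_def[of "[]"])
next
  case (Cons p A)
  obtain a b where p: "p = (a,b)" by (cases p)
  show ?case using Cons by (simp add: p osum_assoc)
qed

lemma hyp_eq: "hyp k = sum_binf (replicate k (0,0))"
  by (simp add: sum_binf_eq hyp_def sbQ_def bq_def fun_eq_iff)

lemma isometric_eq: "isometric (n,Q) (m,R) \<longleftrightarrow>
   (\<exists>f. bij_betw f (vecs n) (vecs m) \<and>
          (\<forall>x\<in>vecs n. \<forall>y\<in>vecs n. f (vadd x y) = vadd (f x) (f y)) \<and>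
          (\<forall>x\<in>vecs n. \<forall>c. f (vscale c x) = vscale c (f x)) \<and>
          (\<forall>x\<in>vecs n. R (f x) = Q x))"
  by (simp add: isometric_def)

lemma iso_refl: "isometric S S"
proof -
  obtain n Q where S: "S = (n,Q)" by (cases S)
  show ?thesis unfolding S isometric_eq by (intro exI[of _ id]) auto
qed

lemma iso_trans: assumes "isometric S T" "isometric T U" shows "isometric S U"
proof -
  obtain n Q where S: "S = (n,Q)" by (cases S)
  obtain m R where T: "T = (m,R)" by (cases T)
  obtain k P where U: "U = (k,P)" by (cases U)
  obtain f where f: "bij_betw f (vecs n) (vecs m)" "\<forall>x\<in>vecs n. \<forall>y\<in>vecs n. f (vadd x y) = vadd (f x) (f y)"
     "\<forall>x\<in>vecs n. \<forall>c. f (vscale c x) = vscale c (f x)" "\<forall>x\<in>vecs n. R (f x) = Q x"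
    using assms(1) unfolding S T isometric_eq by blast
  obtain g where g: "bij_betw g (vecs m) (vecs k)" "\<forall>x\<in>vecs m. \<forall>y\<in>vecs m. g (vadd x y) = vadd (g x) (g y)"
     "\<forall>x\<in>vecs m. \<forall>c. g (vscale c x) = vscale c (g x)" "\<forall>x\<in>vecs m. P (g x) = R x"
    using assms(2) unfolding U T isometric_eq by blast
  have fm: "\<And>x. x \<in> vecs n \<Longrightarrow> f x \<in> vecs m" using f(1) bij_betwE by blast
  show ?thesis unfolding S U isometric_eq
    apply (intro exI[of _ "g \<circ> f"])
    using f g fm bij_betw_trans[OF f(1) g(1)] by auto
qed

lemma iso_sym: assumes "isometric S T" shows "isometric T S"
proof -
  obtain n Q where S: "S = (n,Q)" by (cases S)
  obtain m R where T: "T = (m,R)" by (cases T)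
  obtain f where f: "bij_betw f (vecs n) (vecs m)" "\<forall>x\<in>vecs n. \<forall>y\<in>vecs n. f (vadd x y) = vadd (f x) (f y)"
     "\<forall>x\<in>vecs n. \<forall>c. f (vscale c x) = vscale c (f x)" "\<forall>x\<in>vecs n. R (f x) = Q x"
    using assms(1) unfolding S T isometric_eq by blast
  define g where "g = inv_into (vecs n) f"
  have gb: "bij_betw g (vecs m) (vecs n)" unfolding g_def by (rule bij_betw_inv_into[OF f(1)])
  have gm: "\<And>y. y \<in> vecs m \<Longrightarrow> g y \<in> vecs n" using gb bij_betwE by blast
  have fg: "\<And>y. y \<in> vecs m \<Longrightarrow> f (g y) = y" unfolding g_def using f(1)
    by (simp add: bij_betw_inv_into_right)
  have gf: "\<And>x. x \<in> vecs n \<Longrightarrow> g (f x) = x" unfolding g_def using f(1)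
    by (meson bij_betw_inv_into_left)
  have add: "g (vadd x y) = vadd (g x) (g y)" if "x \<in> vecs m" "y \<in> vecs m" for x y
  proof -
    have "f (vadd (g x) (g y)) = vadd x y" using f(2) gm fg that by simp
    then show ?thesis using gf[of "vadd (g x) (g y)"] gm that by auto
  qed
  have sc: "g (vscale c x) = vscale c (g x)" if "x \<in> vecs m" for x c
  proof -
    have "f (vscale c (g x)) = vscale c x" using f(3) gm fg that by simp
    then show ?thesis using gf[of "vscale c (g x)"] gm that by auto
  qed
  show ?thesis unfolding S T isometric_eq
    apply (intro exI[of _ g])
    using gb add sc f(4) gm fg by (metis)
qed



lemma restr_vadd: "restr n (vadd x y) = vadd (restr n x) (restr n y)"
  by (auto simp: restr_def vadd_def)
lemma restr_vscale: "restr n (vscale c x) = vscale c (restr n x)"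
  by (auto simp: restr_def vscale_def)

lemma iso_osum_left: assumes "isometric X Y" shows "isometric (osum X Z) (osum Y Z)"
proof -
  obtain n Q where X: "X = (n,Q)" by (cases X)
  obtain m R where Y: "Y = (m,R)" by (cases Y)
  obtain k P where Z: "Z = (k,P)" by (cases Z)
  obtain f where f: "bij_betw f (vecs n) (vecs m)" "\<forall>x\<in>vecs n. \<forall>y\<in>vecs n. f (vadd x y) = vadd (f x) (f y)"
     "\<forall>x\<in>vecs n. \<forall>c. f (vscale c x) = vscale c (f x)" "\<forall>x\<in>vecs n. R (f x) = Q x"
    using assms(1) unfolding X Y isometric_eq by blast
  define g where "g = inv_into (vecs n) f"
  have gb: "bij_betw g (vecs m) (vecs n)" unfolding g_def by (rule bij_betw_inv_into[OF f(1)])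
  have gm: "\<And>y. y \<in> vecs m \<Longrightarrow> g y \<in> vecs n" using gb bij_betwE by blast
  have fm: "\<And>y. y \<in> vecs n \<Longrightarrow> f y \<in> vecs m" using f(1) bij_betwE by blast
  have fg: "\<And>y. y \<in> vecs m \<Longrightarrow> f (g y) = y" unfolding g_def using f(1)
    by (simp add: bij_betw_inv_into_right)
  have gf: "\<And>x. x \<in> vecs n \<Longrightarrow> g (f x) = x" unfolding g_def using f(1)
    by (meson bij_betw_inv_into_left)
  define F where "F x = (\<lambda>i. if i < m then f (restr n x) i else if i < m + k then x (n + (i - m)) else 0)" for x
  define G where "G y = (\<lambda>i. if i < n then g (restr m y) i else if i < n + k then y (m + (i - n)) else 0)" for y
  have rF: "restr m (F x) = f (restr n x)" for x
    using fm[OF restr_vecs[of n x]] by (auto simp: F_def restr_def fun_eq_iff vecs_def)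
  have rG: "restr n (G y) = g (restr m y)" for y
    using gm[OF restr_vecs[of m y]] by (auto simp: G_def restr_def fun_eq_iff vecs_def)
  have Fv: "F x \<in> vecs (m+k)" for x by (auto simp: F_def vecs_def)
  have Gv: "G y \<in> vecs (n+k)" for y by (auto simp: G_def vecs_def)
  have GF: "G (F x) = x" if "x \<in> vecs (n+k)" for x
  proof (rule ext)
    fix i
    have e: "G (F x) i = (if i < n then g (f (restr n x)) i else if i < n+k then F x (m + (i-n)) else 0)"
      by (simp add: G_def rF)
    have "g (f (restr n x)) = restr n x" using gf by blast
    then show "G (F x) i = x i" unfolding e using that
      by (auto simp: restr_def vecs_def F_def)
  qed
  have FG: "F (G y) = y" if "y \<in> vecs (m+k)" for y
  proof (rule ext)
    fix i
    have e: "F (G y) i = (if i < m then f (g (restr m y)) i else if i < m+k then G y (n + (i-m)) else 0)"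
      by (simp add: F_def rG)
    have "f (g (restr m y)) = restr m y" using fg by blast
    then show "F (G y) i = y i" unfolding e using that
      by (auto simp: restr_def vecs_def G_def)
  qed
  have bij: "bij_betw F (vecs (n+k)) (vecs (m+k))"
    by (rule bij_betw_byWitness[where f'=G]) (use GF FG Fv Gv in auto)
  have add: "F (vadd x y) = vadd (F x) (F y)" for x y
    using f(2) by (auto simp: F_def restr_vadd fun_eq_iff) (auto simp: vadd_def)
  have sc: "F (vscale c x) = vscale c (F x)" for x c
    using f(3) by (auto simp: F_def restr_vscale fun_eq_iff) (auto simp: vscale_def)
  have rk: "restr k (\<lambda>i. F x (m + i)) = restr k (\<lambda>i. x (n + i))" for x
    by (auto simp: restr_def F_def fun_eq_iff)
  show ?thesis unfolding X Y Z osum_eq isometric_eq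
    apply (intro exI[of _ F])
    using bij add sc f(4) rF rk by auto
qed

lemma iso_osum_comm: "isometric (osum X Y) (osum Y X)"
proof -
  obtain n Q where X: "X = (n,Q)" by (cases X)
  obtain m R where Y: "Y = (m,R)" by (cases Y)
  define F where "F x = (\<lambda>i. if i < m then x (n + i) else if i < m + n then x (i - m) else 0)" for x :: "nat \<Rightarrow> 'a"
  define G where "G y = (\<lambda>i. if i < n then y (m + i) else if i < n + m then y (i - n) else 0)" for y :: "nat \<Rightarrow> 'a"
  have Fv: "F x \<in> vecs (m+n)" for x by (auto simp: F_def vecs_def)
  have Gv: "G y \<in> vecs (n+m)" for y by (auto simp: G_def vecs_def)
  have GF: "G (F x) = x" if "x \<in> vecs (n+m)" for x
    using that by (auto simp: G_def F_def vecs_def fun_eq_iff)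
  have FG: "F (G x) = x" if "x \<in> vecs (m+n)" for x
    using that by (auto simp: G_def F_def vecs_def fun_eq_iff)
  have bij: "bij_betw F (vecs (n+m)) (vecs (m+n))"
    by (rule bij_betw_byWitness[where f'=G]) (use GF FG Fv Gv in auto)
  have 1: "restr m (F x) = restr m (\<lambda>i. x (n + i))" for x by (auto simp: F_def restr_def fun_eq_iff)
  have 2: "restr n (\<lambda>i. F x (m + i)) = restr n x" for x by (auto simp: F_def restr_def fun_eq_iff)
  have Qp: "\<forall>x\<in>vecs (n+m). R (restr m (F x)) + Q (restr n (\<lambda>i. F x (m + i))) = Q (restr n x) + R (restr m (\<lambda>i. x (n + i)))"
    unfolding 1 2 by (simp add: add.commute)
  have add: "\<forall>x\<in>vecs (n+m). \<forall>y\<in>vecs (n+m). F (vadd x y) = vadd (F x) (F y)"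
    by (auto simp: F_def vadd_def fun_eq_iff)
  have sc: "\<forall>x\<in>vecs (n+m). \<forall>c. F (vscale c x) = vscale c (F x)"
    by (auto simp: F_def vscale_def fun_eq_iff)
  show ?thesis unfolding X Y osum_eq isometric_eq
    apply (intro exI[of _ F])
    using bij Qp add sc by (simp add: add.commute)
qed

lemma iso_osum_right: assumes "isometric Y Z" shows "isometric (osum X Y) (osum X Z)"
  by (meson assms iso_osum_comm iso_osum_left iso_trans)

lemma iso_osum_zero: "isometric (osum X zero_space) X"
proof -
  obtain n Q where X: "X = (n,Q)" by (cases X)
  show ?thesis unfolding X osum_eq zero_space_def isometric_eq
    by (intro exI[of _ id]) (auto simp: restr_id)
qed

lemma iso_eq: "S = T \<Longrightarrow> isometric S T" using iso_refl by simp

definition negp :: "'a::field \<times> 'a \<Rightarrow> 'a \<times> 'a" where "negp p = (- fst p, - snd p)"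

lemma iso_pair_hyp: fixes a b :: "'a::field" assumes D: "4*a*b - 1 \<noteq> 0"
  shows "isometric (sum_binf [(0,0),(0,0)]) (sum_binf [(a,b),(-a,-b)])"
proof -
  define D where "D = 4*a*b - 1"
  have Dn: "D \<noteq> 0" using D D_def by simp
  define F where "F y = (\<lambda>i::nat. if i = 0 then y 0 - b * y 1 - 2*b*y 2 - 2*a*b*y 3 / D
       else if i = 1 then y 1 + y 2 + a * y 3 / D
       else if i = 2 then y 0 - b*y 1 - 2*b*y 2 + (1-2*a*b)*y 3/D
       else if i = 3 then - y 2 + a * y 3 / D else 0)" for y :: "nat \<Rightarrow> 'a"
  define G where "G x = (\<lambda>i::nat.
       let y3 = D*(x 2 - x 0); y2 = a*(x 2 - x 0) - x 3; y1 = x 1 + x 3 - 2*a*(x 2 - x 0);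
           y0 = x 0 + b*y1 + 2*b*y2 + 2*a*b*(x 2 - x 0)
       in if i = 0 then y0 else if i = 1 then y1 else if i = 2 then y2 else if i = 3 then y3 else 0)" for x :: "nat \<Rightarrow> 'a"
  have Fv: "F x \<in> vecs 4" for x by (auto simp: F_def vecs_def)
  have Gv: "G y \<in> vecs 4" for y by (auto simp: G_def vecs_def Let_def)
  have n4: "i \<noteq> 0 \<Longrightarrow> i \<noteq> 1 \<Longrightarrow> i \<noteq> 2 \<Longrightarrow> i \<noteq> 3 \<Longrightarrow> 4 \<le> i" for i :: nat by linarith
  have GF: "G (F x) = x" if "x \<in> vecs 4" for x
  proof (rule ext)
    fix i :: nat
    consider "i = 0" | "i = 1" | "i = 2" | "i = 3" | "4 \<le> i" using n4 by blast
    then show "G (F x) i = x i"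
      by cases (use that Dn in \<open>auto simp: G_def F_def Let_def vecs_def field_simps\<close>)
  qed
  have FG: "F (G x) = x" if "x \<in> vecs 4" for x
  proof (rule ext)
    fix i :: nat
    consider "i = 0" | "i = 1" | "i = 2" | "i = 3" | "4 \<le> i" using n4 by blast
    then show "F (G x) i = x i"
      by cases (use that Dn in \<open>auto simp: G_def F_def Let_def vecs_def field_simps\<close>)
  qed
  have bij: "bij_betw F (vecs 4) (vecs 4)"
    by (rule bij_betw_byWitness[where f'=G]) (use GF FG Fv Gv in auto)
  have Q: "sbQ [(a,b),(-a,-b)] (F x) = sbQ [(0,0),(0,0)] x" for x
    unfolding sbQ_def bq_def F_def using Dn
    by (simp add: numeral_eq_Suc field_simps power2_eq_square) (simp add: D_def algebra_simps)
  have add: "\<forall>x\<in>vecs 4. \<forall>y\<in>vecs 4. F (vadd x y) = vadd (F x) (F y)"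
    by (auto simp: F_def vadd_def fun_eq_iff add_divide_distrib[symmetric] algebra_simps)
  have sc: "\<forall>x\<in>vecs 4. \<forall>c. F (vscale c x) = vscale c (F x)"
    by (auto simp: F_def vscale_def fun_eq_iff algebra_simps)
  have l: "2 * length [(a,b),(-a,-b)] = 4" "2 * length [(0::'a,0::'a),(0,0)] = 4" by simp_all
  show ?thesis unfolding sum_binf_eq isometric_eq l
    apply (intro exI[of _ F])
    using bij Q add sc by simp
qed



abbreviation R0 :: "nat \<Rightarrow> ('a::field \<times> 'a) list" where "R0 k \<equiv> replicate k (0,0)"

lemma iso_sb_app_left: "isometric (sum_binf A) (sum_binf A') \<Longrightarrow> isometric (sum_binf (A@B)) (sum_binf (A'@B))"
  by (metis iso_osum_left osum_sum_binf)
lemma iso_sb_app_right: "isometric (sum_binf B) (sum_binf B') \<Longrightarrow> isometric (sum_binf (A@B)) (sum_binf (A@B'))"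
  by (metis iso_osum_right osum_sum_binf)
lemma iso_sb_swap: "isometric (sum_binf (A@B)) (sum_binf (B@A))"
  by (metis iso_osum_comm osum_sum_binf)

lemma iso_neg: assumes "\<forall>p\<in>set N. 4 * fst p * snd p - 1 \<noteq> 0"
  shows "isometric (sum_binf (N @ map negp N)) (sum_binf (R0 (2 * length N)))"
  using assms
proof (induction N)
  case Nil then show ?case by (simp add: iso_refl)
next
  case (Cons p N)
  obtain a b where p: "p = (a,b)" by (cases p)
  have D: "4*a*b - 1 \<noteq> 0" using Cons.prems p by simp
  have 1: "isometric (sum_binf (N @ [negp p] @ map negp N)) (sum_binf ([negp p] @ N @ map negp N))"
    using iso_sb_app_left[OF iso_sb_swap[of N "[negp p]"], of "map negp N"] by simp
  have 2: "isometric (sum_binf ([p] @ (N @ [negp p] @ map negp N))) (sum_binf ([p] @ ([negp p] @ N @ map negp N)))"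
    by (rule iso_sb_app_right[OF 1])
  have 3: "isometric (sum_binf ([p, negp p] @ (N @ map negp N))) (sum_binf (R0 2 @ (N @ map negp N)))"
    apply (rule iso_sb_app_left)
    using iso_sym[OF iso_pair_hyp[OF D]] by (simp add: p negp_def numeral_eq_Suc)
  have 4: "isometric (sum_binf (R0 2 @ (N @ map negp N))) (sum_binf (R0 2 @ R0 (2 * length N)))"
    by (rule iso_sb_app_right) (use Cons in auto)
  have e: "R0 2 @ R0 (2 * length N) = (R0 (2 * length (p#N)) :: ('a\<times>'a) list)"
    by (simp add: replicate_add[symmetric])
  have twob: "isometric (sum_binf (p # N @ negp p # map negp N)) (sum_binf ([p, negp p] @ (N @ map negp N)))"
    using 2 by simp
  show ?case using iso_trans[OF iso_trans[OF twob 3] 4] unfolding e by simp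
qed

lemma hyp0: "hyp 0 = zero_space" by (simp add: hyp_def zero_space_def)

lemma witt_from_iso: "isometric (osum S (hyp k)) (sum_binf T) \<Longrightarrow> witt_equiv S (sum_binf T)"
  unfolding witt_equiv_def
  by (rule exI[of _ k], rule exI[of _ 0]) (metis hyp0 iso_osum_zero iso_sym iso_trans)

lemma backward_plumbing:
  assumes "witt_equiv (osum S (sum_binf N)) (sum_binf P)" "\<forall>p\<in>set N. 4 * fst p * snd p - 1 \<noteq> 0"
  shows "\<exists>l. witt_equiv S (sum_binf (P @ R0 l @ map negp N))"
proof -
  obtain k l where kl: "isometric (osum (osum S (sum_binf N)) (hyp k)) (osum (sum_binf P) (hyp l))"
    using assms(1) unfolding witt_equiv_def by blast
  then have "isometric (osum S (sum_binf (N @ R0 k))) (sum_binf (P @ R0 l))"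
    by (simp add: osum_assoc hyp_eq osum_sum_binf)
  then have "isometric (osum (osum S (sum_binf (N @ R0 k))) (sum_binf (map negp N))) (osum (sum_binf (P @ R0 l)) (sum_binf (map negp N)))"
    by (rule iso_osum_left)
  then have a: "isometric (osum S (sum_binf (N @ R0 k @ map negp N))) (sum_binf (P @ R0 l @ map negp N))"
    by (simp add: osum_assoc osum_sum_binf)
  have b: "isometric (sum_binf (N @ R0 k @ map negp N)) (sum_binf (R0 k @ N @ map negp N))"
    using iso_sb_app_left[OF iso_sb_swap[of N "R0 k"], of "map negp N"] by simp
  have c: "isometric (sum_binf (R0 k @ N @ map negp N)) (sum_binf (R0 k @ R0 (2 * length N)))"
    by (rule iso_sb_app_right[OF iso_neg[OF assms(2)]])
  have d: "isometric (osum S (hyp (k + 2 * length N))) (osum S (sum_binf (N @ R0 k @ map negp N)))"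
    using iso_osum_right[OF iso_sym[OF iso_trans[OF b c]], of S] by (simp add: hyp_eq replicate_add)
  show ?thesis using witt_from_iso[OF iso_trans[OF d a]] by blast
qed

lemma forward_plumbing:
  assumes "witt_equiv S T" "isometric T (sum_binf L)"
  shows "\<exists>k l. witt_equiv (osum S (sum_binf (R0 k))) (sum_binf (L @ R0 l))"
proof -
  obtain k l where kl: "isometric (osum S (hyp k)) (osum T (hyp l))"
    using assms(1) unfolding witt_equiv_def by blast
  have "isometric (osum T (hyp l)) (osum (sum_binf L) (hyp l))" by (rule iso_osum_left[OF assms(2)])
  then have "isometric (osum S (sum_binf (R0 k))) (sum_binf (L @ R0 l))"
    using kl by (metis hyp_eq iso_trans osum_sum_binf)
  then have "witt_equiv (osum S (sum_binf (R0 k))) (sum_binf (L @ R0 l))"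
    using witt_from_iso[of _ 0] iso_osum_zero iso_trans hyp0 by metis
  then show ?thesis by blast
qed



definition unit :: "nat \<Rightarrow> nat \<Rightarrow> 'a::field" where "unit j = (\<lambda>i. if i = j then 1 else 0)"

lemma polar_sbQ: "polar (sbQ L) x y = (\<Sum>k<length L. y (2*k) * (2 * fst (L!k) * x (2*k) + x (2*k+1)) +
      y (2*k+1) * (x (2*k) + 2 * snd (L!k) * x (2*k+1)))"
  unfolding polar_def sbQ_def vadd_def
  by (simp add: sum_subtractf[symmetric] bq_def power2_eq_square algebra_simps)

lemma two_ne_odd: "2 * (k::nat) \<noteq> 2 * k' + 1" by presburger
lemma odd_ne_two: "2 * (k::nat) + 1 \<noteq> 2 * k'" by presburger

lemma polar_unit_even: assumes "k < length L" shows "polar (sbQ L) x (unit (2*k)) = 2 * fst (L!k) * x (2*k) + x (2*k+1)"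
proof -
  have "polar (sbQ L) x (unit (2*k)) = (\<Sum>ka<length L. if ka = k then 2 * fst (L!ka) * x (2*ka) + x (2*ka+1) else 0)"
    unfolding polar_sbQ by (intro sum.cong) (auto simp: unit_def odd_ne_two)
  then show ?thesis using assms by simp
qed

lemma polar_unit_odd: assumes "k < length L" shows "polar (sbQ L) x (unit (2*k+1)) = x (2*k) + 2 * snd (L!k) * x (2*k+1)"
proof -
  have "polar (sbQ L) x (unit (2*k+1)) = (\<Sum>ka<length L. if ka = k then x (2*ka) + 2 * snd (L!ka) * x (2*ka+1) else 0)"
    unfolding polar_sbQ by (intro sum.cong) (auto simp: unit_def two_ne_odd)
  then show ?thesis using assms by simp
qed

lemma binf_eq: "binf a b = sum_binf [(a,b)]"
  by (simp add: binf_def sum_binf_eq sbQ_def bq_def fun_eq_iff)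

lemma qform_sb: "is_qform (sum_binf L)"
  unfolding sum_binf_eq is_qform_def
proof (simp, intro conjI ballI allI)
  fix x :: "nat \<Rightarrow> 'a" and c
  show "sbQ L (vscale c x) = c\<^sup>2 * sbQ L x"
    unfolding sbQ_def vscale_def by (simp add: sum_distrib_left bq_def power2_eq_square algebra_simps)
next
  fix x y z :: "nat \<Rightarrow> 'a"
  show "polar (sbQ L) (vadd x y) z = polar (sbQ L) x z + polar (sbQ L) y z"
    unfolding polar_sbQ vadd_def by (simp add: sum.distrib[symmetric] algebra_simps)
next
  fix x y :: "nat \<Rightarrow> 'a" and c
  show "polar (sbQ L) (vscale c x) y = c * polar (sbQ L) x y"
    unfolding polar_sbQ vscale_def by (simp add: sum_distrib_left algebra_simps)
qed

lemma nonsing_sb: assumes "\<forall>p\<in>set L. 4 * fst p * snd p - 1 \<noteq> 0" shows "nonsingular (sum_binf L)"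
  unfolding nonsingular_def
proof (intro conjI qform_sb)
  show "case sum_binf L of (n, Q) \<Rightarrow> \<forall>x\<in>vecs n. (\<forall>y\<in>vecs n. polar Q x y = 0) \<longrightarrow> x = (\<lambda>_. 0)"
    unfolding sum_binf_eq
  proof (simp, intro ballI impI ext)
    fix x :: "nat \<Rightarrow> 'a" and i
    assume x: "x \<in> vecs (2 * length L)" and p: "\<forall>y\<in>vecs (2 * length L). polar (sbQ L) x y = 0"
    have blk: "x (2*k) = 0 \<and> x (2*k+1) = 0" if k: "k < length L" for k
    proof -
      have u1: "unit (2*k) \<in> vecs (2 * length L)" "unit (2*k+1) \<in> vecs (2 * length L)"
        using k by (auto simp: unit_def vecs_def)
      have e1: "2 * fst (L!k) * x (2*k) + x (2*k+1) = 0" using p[rule_format, OF u1(1)] polar_unit_even[OF k, of x] by simp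
      have e2: "x (2*k) + 2 * snd (L!k) * x (2*k+1) = 0" using p[rule_format, OF u1(2)] polar_unit_odd[OF k, of x] by simp
      have D: "4 * fst (L!k) * snd (L!k) - 1 \<noteq> 0" using assms k by auto
      have "x (2*k+1) = - 2 * fst (L!k) * x (2*k)" using e1 by (simp add: eq_neg_iff_add_eq_0 add.commute)
      then have "x (2*k) * (4 * fst (L!k) * snd (L!k) - 1) = 0" using e2 by (simp add: algebra_simps)
      then have "x (2*k) = 0" using D by simp
      then show ?thesis using e1 by simp
    qed
    show "x i = 0"
    proof (cases "i < 2 * length L")
      case True
      have "i div 2 < length L" using True by linarith
      then consider "even i" "i div 2 < length L" | "odd i" "i div 2 < length L" by blast
      then show ?thesis
      proof cases
        case 1 then show ?thesis using blk[of "i div 2"] by simp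
      next
        case 2 then show ?thesis using blk[of "i div 2"] by (metis odd_two_times_div_two_succ)
      qed
    next
      case False then show ?thesis using x by (simp add: vecs_def)
    qed
  qed
qed



lemma le_comb1: fixes A :: "'g::linordered_ab_group_add"
  assumes "a1 \<le> b1" "b1 - a1 = B - A" shows "A \<le> B"
proof -
  have "0 \<le> b1 - a1" using assms(1) by simp
  then show ?thesis using assms(2) by simp
qed
lemma le_comb2: fixes A :: "'g::linordered_ab_group_add"
  assumes "a1 \<le> b1" "a2 \<le> b2" "(b1 - a1) + (b2 - a2) = B - A" shows "A \<le> B"
proof -
  have "0 \<le> (b1 - a1) + (b2 - a2)" using assms(1,2) by (simp add: add_nonneg_nonneg)
  then show ?thesis using assms(3) by simp
qed
lemma le_comb3: fixes A :: "'g::linordered_ab_group_add"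
  assumes "a1 \<le> b1" "a2 \<le> b2" "a3 \<le> b3" "(b1 - a1) + (b2 - a2) + (b3 - a3) = B - A" shows "A \<le> B"
proof -
  have "0 \<le> (b1 - a1) + (b2 - a2) + (b3 - a3)" using assms(1,2,3) by (simp add: add_nonneg_nonneg)
  then show ?thesis using assms(4) by simp
qed
lemma lt_comb3: fixes A :: "'g::linordered_ab_group_add"
  assumes "a1 < b1" "a2 \<le> b2" "a3 \<le> b3" "(b1 - a1) + (b2 - a2) + (b3 - a3) = B - A" shows "A < B"
proof -
  have "0 < (b1 - a1) + (b2 - a2) + (b3 - a3)" using assms(1,2,3)
    by (simp add: add_pos_nonneg)
  then show ?thesis using assms(4) by simp
qed

definition vge :: "('a::field \<Rightarrow> 'g::linordered_ab_group_add) \<Rightarrow> 'g \<Rightarrow> 'a \<Rightarrow> bool" where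
  "vge v l z \<longleftrightarrow> (z \<noteq> 0 \<longrightarrow> l \<le> v z)"

lemma vge_add: "valuation v \<Longrightarrow> vge v l x \<Longrightarrow> vge v l y \<Longrightarrow> vge v l (x + y)"
  unfolding vge_def using val_add_ge by blast

lemma vge_sum: assumes "valuation v" "finite I" "\<And>i. i \<in> I \<Longrightarrow> vge v l (f i)" shows "vge v l (sum f I)"
  unfolding vge_def using val_sum_ge[OF assms(1,2)] assms(3) unfolding vge_def by blast

definition nrm :: "('a::field \<Rightarrow> 'g::linordered_ab_group_add) \<Rightarrow> (nat \<Rightarrow> 'g) \<Rightarrow> nat \<Rightarrow> (nat \<Rightarrow> 'a) \<Rightarrow> 'g" where
  "nrm v w n x = Min {v (x i) + w i | i. i < n \<and> x i \<noteq> 0}"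

lemma nrm_le: "i < n \<Longrightarrow> x i \<noteq> 0 \<Longrightarrow> nrm v w n x \<le> v (x i) + w i"
  unfolding nrm_def by (rule Min_le) auto

lemma nrm_att: assumes "x \<in> vecs n" "x \<noteq> (\<lambda>_. 0)"
  shows "\<exists>i<n. x i \<noteq> 0 \<and> nrm v w n x = v (x i) + w i"
proof -
  obtain j where j: "x j \<noteq> 0" using assms(2) by auto
  then have "j < n" using assms(1) by (rule_tac ccontr) (auto simp: vecs_def)
  then have ne: "{v (x i) + w i | i. i < n \<and> x i \<noteq> 0} \<noteq> {}" using j by auto
  have "finite {v (x i) + w i | i. i < n \<and> x i \<noteq> 0}" by simp
  from Min_in[OF this ne] show ?thesis unfolding nrm_def by auto
qed

lemma nrm_unit: "j < n \<Longrightarrow> valuation v \<Longrightarrow> nrm v w n (unit j) = w j"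
proof -
  assume j: "j < n" and v: "valuation v"
  have "{v (unit j i) + w i | i. i < n \<and> (unit j i :: 'a) \<noteq> 0} = {w j}"
    using j val_one[OF v] by (auto simp: unit_def)
  then show ?thesis unfolding nrm_def by simp
qed

lemma unit_vecs: "j < n \<Longrightarrow> unit j \<in> vecs n" by (auto simp: unit_def vecs_def)
lemma unit_nz: "unit j \<noteq> (\<lambda>_. 0::'a::field)" by (auto simp: unit_def fun_eq_iff)

lemma vnorm_nrm: fixes v :: "'a::field \<Rightarrow> 'g::linordered_ab_group_add"
  assumes v: "valuation v" shows "vnorm v n (nrm v w n)"
  unfolding vnorm_def
proof (intro conjI allI ballI impI)
  fix k :: 'a and x :: "nat \<Rightarrow> 'a" assume x: "x \<in> vecs n" and kx: "k \<noteq> 0 \<and> x \<noteq> (\<lambda>_. 0)"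
  have sx: "vscale k x \<in> vecs n" "vscale k x \<noteq> (\<lambda>_. 0)" using x kx by (auto simp: vscale_def fun_eq_iff vecs_def)
  obtain i where i: "i < n" "vscale k x i \<noteq> 0" "nrm v w n (vscale k x) = v (vscale k x i) + w i"
    using nrm_att[OF sx] by blast
  obtain j where j: "j < n" "x j \<noteq> 0" "nrm v w n x = v (x j) + w j" using nrm_att[OF x] kx by blast
  have xi: "x i \<noteq> 0" "v (vscale k x i) = v k + v (x i)" using i kx val_mult[OF v] by (auto simp: vscale_def)
  have xj: "vscale k x j \<noteq> 0" "v (vscale k x j) = v k + v (x j)" using j kx val_mult[OF v] by (auto simp: vscale_def)
  have 1: "nrm v w n (vscale k x) \<le> v k + nrm v w n x"
    using nrm_le[of j n "vscale k x" v w, OF j(1) xj(1)] xj(2) j(3) by (simp add: add.assoc)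
  have 2: "v k + nrm v w n x \<le> nrm v w n (vscale k x)"
    using nrm_le[of i n x v w, OF i(1) xi(1)] xi(2) i(3) by (simp add: add.assoc)
  show "nrm v w n (vscale k x) = v k + nrm v w n x" using 1 2 by simp
next
  fix x y :: "nat \<Rightarrow> 'a" assume x: "x \<in> vecs n" and y: "y \<in> vecs n" and nz: "x \<noteq> (\<lambda>_. 0) \<and> y \<noteq> (\<lambda>_. 0) \<and> vadd x y \<noteq> (\<lambda>_. 0)"
  obtain i where i: "i < n" "vadd x y i \<noteq> 0" "nrm v w n (vadd x y) = v (vadd x y i) + w i"
    using nrm_att[OF vadd_vecs[OF x y]] nz by blast
  let ?m = "min (nrm v w n x) (nrm v w n y)"
  have "?m - w i \<le> v (x i + y i)"
  proof (rule val_add_ge[OF v])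
    show "x i + y i \<noteq> 0" using i by (simp add: vadd_def)
    show "?m - w i \<le> v (x i)" if "x i \<noteq> 0"
      using nrm_le[of i n x v w, OF i(1) that] by (simp add: diff_le_eq min.coboundedI1)
    show "?m - w i \<le> v (y i)" if "y i \<noteq> 0"
      using nrm_le[of i n y v w, OF i(1) that] by (simp add: diff_le_eq min.coboundedI2)
  qed
  then show "?m \<le> nrm v w n (vadd x y)" using i(3) by (simp add: vadd_def diff_le_eq)
next
  show "\<exists>e. (\<forall>i<n. e i \<in> vecs n) \<and> bij_betw (\<lambda>c j. \<Sum>i<n. c i * e i j) (vecs n) (vecs n) \<and>
        (\<forall>c\<in>vecs n. c \<noteq> (\<lambda>_. 0) \<longrightarrow> nrm v w n (\<lambda>j. \<Sum>i<n. c i * e i j) = Min {v (c i) + nrm v w n (e i) |i. i < n \<and> c i \<noteq> 0})"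
  proof (intro exI[of _ unit] conjI allI impI ballI)
    have idm: "(\<lambda>j. \<Sum>i<n. c i * unit i j) = c" if "c \<in> vecs n" for c :: "nat \<Rightarrow> 'a"
    proof (rule ext)
      fix j
      have "(\<Sum>i<n. c i * unit i j) = (\<Sum>i<n. if j = i then c i else 0)"
        by (rule sum.cong) (auto simp: unit_def)
      then show "(\<Sum>i<n. c i * unit i j) = c j" using that by (auto simp: vecs_def)
    qed
    show "bij_betw (\<lambda>c j. \<Sum>i<n. c i * (unit i j :: 'a)) (vecs n) (vecs n)"
      by (rule bij_betw_byWitness[where f'=id]) (auto simp: idm)
    fix c :: "nat \<Rightarrow> 'a" assume c: "c \<in> vecs n" "c \<noteq> (\<lambda>_. 0)"
    have "{v (c i) + nrm v w n (unit i) |i. i < n \<and> c i \<noteq> 0} = {v (c i) + w i |i. i < n \<and> c i \<noteq> 0}"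
    proof -
      have "\<And>i. i < n \<Longrightarrow> nrm v w n (unit i) = w i" using nrm_unit[OF _ v] by blast
      then show ?thesis by (intro Collect_cong) (metis (no_types, lifting))
    qed
    then show "nrm v w n (\<lambda>j. \<Sum>i<n. c i * unit i j) = Min {v (c i) + nrm v w n (unit i) |i. i < n \<and> c i \<noteq> 0}"
      unfolding idm[OF c(1)] nrm_def by simp
  qed (rule unit_vecs)
qed



lemma vge_mult: "valuation v \<Longrightarrow> vge v lx x \<Longrightarrow> vge v ly y \<Longrightarrow> vge v (lx + ly) (x * y)"
  unfolding vge_def using val_mult by (metis add_mono mult_eq_0_iff)

lemma vge_mono: "l' \<le> l \<Longrightarrow> vge v l z \<Longrightarrow> vge v l' z"
  unfolding vge_def by auto

lemma vge_eq: "l' = l \<Longrightarrow> vge v l z \<Longrightarrow> vge v l' z" by simp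

definition cfit :: "('a::field \<Rightarrow> 'g::linordered_ab_group_add) \<Rightarrow> 'g \<Rightarrow> ('a \<times> 'a) list \<Rightarrow> (nat \<Rightarrow> 'g) \<Rightarrow> bool" where
  "cfit v \<gamma> L w \<longleftrightarrow> (\<forall>k<length L. w (2*k+1) = - \<gamma> - w (2*k) \<and>
      vge v (w (2*k) + w (2*k)) (fst (L!k)) \<and> vge v (w (2*k+1) + w (2*k+1)) (snd (L!k)))"

lemma vge_coord: "i < n \<Longrightarrow> vge v (nrm v w n x - w i) (x i)"
  unfolding vge_def using nrm_le[of i n x v w] by (simp add: diff_le_eq)

locale cctx =
  fixes v :: "'a::field \<Rightarrow> 'g::linordered_ab_group_add" and \<gamma> :: 'g
  assumes val: "valuation v" and g0: "0 \<le> \<gamma>" and g2: "(2::'a) = 0 \<or> \<gamma> < v 2"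
begin

lemma vge2: "vge v \<gamma> (2::'a)" unfolding vge_def using g2 by auto

lemma vge2s: "(2::'a) \<noteq> 0 \<Longrightarrow> \<gamma> < v 2" using g2 by auto

lemma compat_sb:
  assumes fit: "cfit v \<gamma> L w"
  shows "compatible v (sum_binf L) (nrm v w (2 * length L)) \<gamma>"
proof -
  define n where "n = 2 * length L"
  define \<alpha> where "\<alpha> = nrm v w n"
  have wodd: "\<And>k. k < length L \<Longrightarrow> w (2*k+1) = - \<gamma> - w (2*k)" using fit unfolding cfit_def by blast
  have va: "\<And>k. k < length L \<Longrightarrow> vge v (w (2*k) + w (2*k)) (fst (L!k))" using fit unfolding cfit_def by blast
  have vb: "\<And>k. k < length L \<Longrightarrow> vge v (w (2*k+1) + w (2*k+1)) (snd (L!k))" using fit unfolding cfit_def by blast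
  have cx: "\<And>x i. i < n \<Longrightarrow> vge v (\<alpha> x - w i) (x i)" unfolding \<alpha>_def by (rule vge_coord)
  have kn: "\<And>k. k < length L \<Longrightarrow> 2*k < n \<and> 2*k+1 < n" unfolding n_def by simp
  have A: "vge v (\<alpha> x + \<alpha> y + \<gamma>) (polar (sbQ L) x y)" for x y
    unfolding polar_sbQ
  proof (rule vge_sum[OF val])
    show "finite {..<length L}" by simp
    fix k assume "k \<in> {..<length L}"
    then have k: "k < length L" by simp
    let ?a = "fst (L!k)" and ?b = "snd (L!k)" and ?l = "\<alpha> x + \<alpha> y + \<gamma>"
    have e: "y (2*k) * (2 * ?a * x (2*k) + x (2*k+1)) + y (2*k+1) * (x (2*k) + 2 * ?b * x (2*k+1))
      = (y (2*k) * ((2 * ?a) * x (2*k)) + y (2*k) * x (2*k+1)) + (y (2*k+1) * x (2*k) + y (2*k+1) * ((2 * ?b) * x (2*k+1)))"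
      by (simp add: algebra_simps)
    have w1: "w (Suc (k*2)) = - \<gamma> - w (k*2)" using wodd[OF k] by (simp add: mult.commute)
    have m1: "vge v ?l (y (2*k) * ((2 * ?a) * x (2*k)))"
      apply (rule vge_mono[OF _ vge_mult[OF val cx vge_mult[OF val vge_mult[OF val vge2 va[OF k]] cx]]])
      using kn[OF k] g0 by (auto simp: algebra_simps)
    have m2: "vge v ?l (y (2*k) * x (2*k+1))"
      apply (rule vge_mono[OF _ vge_mult[OF val cx cx]])
      using kn[OF k] by (auto simp: algebra_simps w1)
    have m3: "vge v ?l (y (2*k+1) * x (2*k))"
      apply (rule vge_mono[OF _ vge_mult[OF val cx cx]])
      using kn[OF k] by (auto simp: algebra_simps w1)
    have m4: "vge v ?l (y (2*k+1) * ((2 * ?b) * x (2*k+1)))"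
      apply (rule vge_mono[OF _ vge_mult[OF val cx vge_mult[OF val vge_mult[OF val vge2 vb[OF k]] cx]]])
      using kn[OF k] by (auto simp: algebra_simps)
    show "vge v ?l (y (2*k) * (2 * ?a * x (2*k) + x (2*k+1)) + y (2*k+1) * (x (2*k) + 2 * ?b * x (2*k+1)))"
      unfolding e using m1 m2 m3 m4 vge_add[OF val] by presburger
  qed
  have B: "vge v (\<alpha> x + \<alpha> x) (sbQ L x)" for x
    unfolding sbQ_def
  proof (rule vge_sum[OF val])
    show "finite {..<length L}" by simp
    fix k assume "k \<in> {..<length L}"
    then have k: "k < length L" by simp
    let ?a = "fst (L!k)" and ?b = "snd (L!k)" and ?l = "\<alpha> x + \<alpha> x"
    have e: "bq ?a ?b (x (2*k)) (x (2*k+1)) = (?a * (x (2*k) * x (2*k)) + x (2*k) * x (2*k+1)) + ?b * (x (2*k+1) * x (2*k+1))"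
      by (simp add: bq_def power2_eq_square)
    have w1: "w (Suc (k*2)) = - \<gamma> - w (k*2)" using wodd[OF k] by (simp add: mult.commute)
    have m1: "vge v ?l (?a * (x (2*k) * x (2*k)))"
      apply (rule vge_mono[OF _ vge_mult[OF val va[OF k] vge_mult[OF val cx cx]]])
      using kn[OF k] by (auto simp: algebra_simps)
    have m2: "vge v ?l (x (2*k) * x (2*k+1))"
      apply (rule vge_mono[OF _ vge_mult[OF val cx cx]])
      using kn[OF k] g0 by (auto simp: algebra_simps w1)
    have m3: "vge v ?l (?b * (x (2*k+1) * x (2*k+1)))"
      apply (rule vge_mono[OF _ vge_mult[OF val vb[OF k] vge_mult[OF val cx cx]]])
      using kn[OF k] by (auto simp: algebra_simps)
    show "vge v ?l (bq ?a ?b (x (2*k)) (x (2*k+1)))"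
      unfolding e using m1 m2 m3 vge_add[OF val] by presburger
  qed
  have C: "\<exists>y\<in>vecs n. y \<noteq> (\<lambda>_. 0) \<and> polar (sbQ L) x y \<noteq> 0 \<and> v (polar (sbQ L) x y) = \<alpha> x + \<alpha> y + \<gamma>"
    if x: "x \<in> vecs n" "x \<noteq> (\<lambda>_. 0)" for x
  proof -
    obtain i where i: "i < n" "x i \<noteq> 0" "\<alpha> x = v (x i) + w i" using nrm_att[OF x] unfolding \<alpha>_def by blast
    define k where "k = i div 2"
    have k: "k < length L" using i(1) unfolding k_def n_def by linarith
    have w1: "w (2*k+1) = - \<gamma> - w (2*k)" by (rule wodd[OF k])
    have cx0: "vge v (\<alpha> x - w (2*k)) (x (2*k))" and cx1: "vge v (\<alpha> x - w (2*k+1)) (x (2*k+1))"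
      using cx kn[OF k] by blast+
    show ?thesis
    proof (cases "even i")
      case True
      then have ii: "i = 2*k" unfolding k_def by simp
      let ?u = "- (2 * snd (L!k) * x (2*k+1))"
      have "x (2*k) - ?u \<noteq> 0 \<and> v (x (2*k) - ?u) = v (x (2*k))"
      proof (rule val_diff_eq[OF val])
        show "x (2*k) \<noteq> 0" using i ii by simp
        assume u: "?u \<noteq> 0"
        then have nz: "(2::'a) \<noteq> 0" "snd (L!k) \<noteq> 0" "x (2*k+1) \<noteq> 0" by auto
        have vu: "v ?u = v 2 + v (snd (L!k)) + v (x (2*k+1))"
          using nz val_mult[OF val] val_neg[OF val] by simp
        have h1: "\<gamma> < v 2" using vge2s nz by blast
        have h2: "w (2*k+1) + w (2*k+1) \<le> v (snd (L!k))" using vb[OF k] nz unfolding vge_def by blast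
        have h3: "\<alpha> x - w (2*k+1) \<le> v (x (2*k+1))" using cx1 nz unfolding vge_def by blast
        show "v (x (2*k)) < v ?u"
          unfolding vu by (rule lt_comb3[OF h1 h2 h3]) (use i ii w1 in \<open>simp add: algebra_simps\<close>)
      qed
      then have p: "polar (sbQ L) x (unit (2*k+1)) \<noteq> 0" "v (polar (sbQ L) x (unit (2*k+1))) = v (x (2*k))"
        using polar_unit_odd[OF k, of x] by (simp_all add: diff_minus_eq_add)
      have ay: "\<alpha> (unit (2*k+1)) = w (2*k+1)" unfolding \<alpha>_def using nrm_unit[OF _ val] kn[OF k] by blast
      show ?thesis
        apply (rule bexI[of _ "unit (2*k+1)"])
        using p ay unit_nz unit_vecs kn[OF k] i ii w1 by (auto simp: algebra_simps)
    next
      case False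
      then have ii: "i = 2*k+1" unfolding k_def by simp
      let ?u = "- (2 * fst (L!k) * x (2*k))"
      have "x (2*k+1) - ?u \<noteq> 0 \<and> v (x (2*k+1) - ?u) = v (x (2*k+1))"
      proof (rule val_diff_eq[OF val])
        show "x (2*k+1) \<noteq> 0" using i ii by simp
        assume u: "?u \<noteq> 0"
        then have nz: "(2::'a) \<noteq> 0" "fst (L!k) \<noteq> 0" "x (2*k) \<noteq> 0" by auto
        have vu: "v ?u = v 2 + v (fst (L!k)) + v (x (2*k))"
          using nz val_mult[OF val] val_neg[OF val] by simp
        have h1: "\<gamma> < v 2" using vge2s nz by blast
        have h2: "w (2*k) + w (2*k) \<le> v (fst (L!k))" using va[OF k] nz unfolding vge_def by blast
        have h3: "\<alpha> x - w (2*k) \<le> v (x (2*k))" using cx0 nz unfolding vge_def by blast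
        show "v (x (2*k+1)) < v ?u"
          unfolding vu by (rule lt_comb3[OF h1 h2 h3]) (use i ii w1 in \<open>simp add: algebra_simps\<close>)
      qed
      then have p: "polar (sbQ L) x (unit (2*k)) \<noteq> 0" "v (polar (sbQ L) x (unit (2*k))) = v (x (2*k+1))"
        using polar_unit_even[OF k, of x] by (simp_all add: diff_minus_eq_add add.commute)
      have ay: "\<alpha> (unit (2*k)) = w (2*k)" unfolding \<alpha>_def using nrm_unit[OF _ val] kn[OF k] by blast
      show ?thesis
        apply (rule bexI[of _ "unit (2*k)"])
        using p ay unit_nz unit_vecs[of "2*k" n] kn[OF k] i ii w1 by (auto simp: algebra_simps)
    qed
  qed
  show ?thesis
    unfolding compatible_def sum_binf_eq n_def[symmetric] \<alpha>_def[symmetric]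
    using g0 vnorm_nrm[OF val, of n w] A B C unfolding \<alpha>_def vge_def by auto
qed

end


context cctx begin

lemma gen_D: assumes "gen_cond v \<gamma> a b" shows "4 * a * b - 1 \<noteq> 0"
proof (cases "(2::'a) = 0")
  case True
  have "(4::'a) = 2 * 2" by simp
  then show ?thesis using True by simp
next
  case two: False
  show ?thesis
  proof (cases "a = 0 \<or> b = 0")
    case True then show ?thesis by auto
  next
    case False
    then have ab: "a \<noteq> 0" "b \<noteq> 0" by auto
    have h: "- (\<gamma> + \<gamma>) \<le> v a + v b" using assms ab unfolding gen_cond_def by auto
    have e: "4 * a * b = 2 * (2 * (a * b))" by simp
    have "v (2 * (2 * (a * b))) = v 2 + (v 2 + (v a + v b))"
      using two ab val_mult[OF val, of 2 "2 * (a*b)"] val_mult[OF val, of 2 "a*b"] val_mult[OF val, of a b]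
      by (simp del: mult_2 add: )
    then have v4: "v (4 * a * b) = v 2 + v 2 + (v a + v b)" unfolding e by (simp add: add.assoc)
    have g: "\<gamma> < v 2" using vge2s two by blast
    have "0 < v (4 * a * b)" unfolding v4
      by (rule lt_comb3[OF g less_imp_le[OF g] h]) (simp add: algebra_simps)
    then show ?thesis
    proof (intro notI)
      assume "0 < v (4 * a * b)" "4 * a * b - 1 = 0"
      then show False using val_one[OF val] by (simp add: right_minus_eq)
    qed
  qed
qed

lemma gen_negp: "gen_cond v \<gamma> a b \<Longrightarrow> gen_cond v \<gamma> (-a) (-b)"
  unfolding gen_cond_def using val_neg[OF val, of a] val_neg[OF val, of b] by simp

definition half :: "'g \<Rightarrow> 'g" where "half g = (SOME h. h + h = g)"

lemma half: assumes "divisible_group (UNIV :: 'g set)" shows "half g + half g = g"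
proof -
  have "\<exists>h\<in>UNIV. (\<Sum>i<(2::nat). h) = g"
    using assms[unfolded divisible_group_def, rule_format, of g 2] by simp
  then obtain h where "(\<Sum>i<2::nat. h) = g" by blast
  then have "h + h = g" by (simp add: eval_nat_numeral)
  then show ?thesis unfolding half_def by (rule someI)
qed

lemma cfit_exists: assumes div: "divisible_group (UNIV :: 'g set)"
  and gen: "\<forall>(a,b)\<in>set L. gen_cond v \<gamma> a b"
  shows "\<exists>w. cfit v \<gamma> L w"
proof -
  define W where "W k = (if fst (L!k) \<noteq> 0 then half (v (fst (L!k)))
      else if snd (L!k) \<noteq> 0 then - \<gamma> - half (v (snd (L!k))) else 0)" for k
  define w where "w i = (if even i then W (i div 2) else - \<gamma> - W (i div 2))" for i
  have "cfit v \<gamma> L w" unfolding cfit_def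
  proof (intro allI impI conjI)
    fix k assume k: "k < length L"
    have w0: "w (2*k) = W k" and w1: "w (2*k+1) = - \<gamma> - W k" unfolding w_def by simp_all
    show "w (2*k+1) = - \<gamma> - w (2*k)" unfolding w0 w1 ..
    have "L!k \<in> set L" using k by simp
    then have "case L!k of (a,b) \<Rightarrow> gen_cond v \<gamma> a b" by (rule bspec[OF gen])
    then have g: "gen_cond v \<gamma> (fst (L!k)) (snd (L!k))" by (simp add: case_prod_beta)
    show "vge v (w (2*k) + w (2*k)) (fst (L!k))"
      unfolding vge_def w0 W_def using half[OF div, of "v (fst (L!k))"] by auto
    show "vge v (w (2*k+1) + w (2*k+1)) (snd (L!k))"
      unfolding vge_def w1
    proof
      assume b: "snd (L!k) \<noteq> 0"
      show "- \<gamma> - W k + (- \<gamma> - W k) \<le> v (snd (L!k))"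
      proof (cases "fst (L!k) = 0")
        case True
        then have "W k = - \<gamma> - half (v (snd (L!k)))" using b unfolding W_def by simp
        then have "- \<gamma> - W k = half (v (snd (L!k)))" by simp
        then show ?thesis using half[OF div, of "v (snd (L!k))"] by simp
      next
        case False
        then have Wk: "W k = half (v (fst (L!k)))" unfolding W_def by simp
        have h: "- (\<gamma> + \<gamma>) \<le> v (fst (L!k)) + v (snd (L!k))" using g False b unfolding gen_cond_def by auto
        show ?thesis unfolding Wk
          by (rule le_comb1[OF h]) (use half[OF div, of "v (fst (L!k))"] in \<open>simp add: algebra_simps\<close>)
      qed
    qed
  qed
  then show ?thesis by blast
qed

lemma backward:
  assumes div: "divisible_group (UNIV :: 'g set)" and ig: "in_generated v \<gamma> S"
  shows "in_W_eps v \<gamma> S"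
proof -
  obtain P N where P: "\<forall>(a, b)\<in>set P. gen_cond v \<gamma> a b" and N: "\<forall>(a, b)\<in>set N. gen_cond v \<gamma> a b"
    and we: "witt_equiv (osum S (sum_binf N)) (sum_binf P)"
    using ig unfolding in_generated_def by auto
  have ND: "\<forall>p\<in>set N. 4 * fst p * snd p - 1 \<noteq> 0"
  proof
    fix p assume "p \<in> set N"
    then have "case p of (a,b) \<Rightarrow> gen_cond v \<gamma> a b" by (rule bspec[OF N])
    then show "4 * fst p * snd p - 1 \<noteq> 0" using gen_D by (simp add: case_prod_beta)
  qed
  have "\<exists>l. witt_equiv S (sum_binf (P @ R0 l @ map negp N))" by (rule backward_plumbing[OF we ND])
  then obtain l where T: "witt_equiv S (sum_binf (P @ R0 l @ map negp N))" by (elim exE)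
  define L where "L = P @ R0 l @ map negp N"
  have gL: "\<forall>(a,b)\<in>set L. gen_cond v \<gamma> a b"
  proof
    fix p assume "p \<in> set L"
    then consider "p \<in> set P" | "p = (0,0)" | "p \<in> negp ` set N" unfolding L_def by (auto split: if_splits)
    then show "case p of (a,b) \<Rightarrow> gen_cond v \<gamma> a b"
    proof cases
      case 1 then show ?thesis by (rule bspec[OF P])
    next
      case 2 then show ?thesis by (simp add: gen_cond_def)
    next
      case 3 then obtain q where q: "q \<in> set N" "p = negp q" by blast
      have "case q of (a,b) \<Rightarrow> gen_cond v \<gamma> a b" by (rule bspec[OF N q(1)])
      then show ?thesis using q(2) gen_negp by (simp add: negp_def case_prod_beta)
    qed
  qed
  obtain w where w: "cfit v \<gamma> L w" using cfit_exists[OF div gL] by blast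
  have "\<forall>p\<in>set L. 4 * fst p * snd p - 1 \<noteq> 0"
  proof
    fix p assume "p \<in> set L"
    then have "case p of (a,b) \<Rightarrow> gen_cond v \<gamma> a b" by (rule bspec[OF gL])
    then show "4 * fst p * snd p - 1 \<noteq> 0" using gen_D by (simp add: case_prod_beta)
  qed
  then have ns: "nonsingular (sum_binf L)" by (rule nonsing_sb)
  have T': "witt_equiv S (sum_binf L)" using T unfolding L_def .
  show ?thesis unfolding in_W_eps_def
    apply (rule exI[of _ "sum_binf L"], rule exI[of _ "nrm v w (2 * length L)"], rule exI[of _ \<gamma>])
    using ns T' compat_sb[OF w] by simp
qed

end


definition lc :: "nat set \<Rightarrow> (nat \<Rightarrow> 'a::field) \<Rightarrow> (nat \<Rightarrow> nat \<Rightarrow> 'a) \<Rightarrow> nat \<Rightarrow> 'a" where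
  "lc I c g = (\<lambda>j. \<Sum>i\<in>I. c i * g i j)"

abbreviation zv :: "nat \<Rightarrow> 'a::field" where "zv \<equiv> (\<lambda>_. 0)"

lemma lc_empty[simp]: "lc {} c g = zv" by (simp add: lc_def)

lemma lc_insert: "finite I \<Longrightarrow> i \<notin> I \<Longrightarrow> lc (insert i I) c g = vadd (vscale (c i) (g i)) (lc I c g)"
  by (simp add: lc_def vadd_def vscale_def fun_eq_iff)

lemma lc_vecs: "finite I \<Longrightarrow> (\<And>i. i \<in> I \<Longrightarrow> g i \<in> vecs n) \<Longrightarrow> lc I c g \<in> vecs n"
  by (auto simp: lc_def vecs_def)

lemma lc_cong: "(\<And>i. i \<in> I \<Longrightarrow> c i = c' i) \<Longrightarrow> lc I c g = lc I c' g"
  by (simp add: lc_def)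

lemma lc_cong2: "(\<And>i. i \<in> I \<Longrightarrow> g i = g' i) \<Longrightarrow> lc I c g = lc I c g'"
  by (simp add: lc_def)

lemma vadd_zero_left[simp]: "vadd zv y = y" by (simp add: vadd_def)
lemma vadd_zero_right[simp]: "vadd y zv = y" by (simp add: vadd_def)
lemma vscale_zero[simp]: "vscale 0 x = zv" by (simp add: vscale_def)
lemma vscale_one[simp]: "vscale 1 x = x" by (simp add: vscale_def)
lemma vscale_zv[simp]: "vscale c zv = zv" by (simp add: vscale_def)

lemma vscale_nz: "c \<noteq> 0 \<Longrightarrow> x \<noteq> zv \<Longrightarrow> vscale c x \<noteq> zv"
  by (auto simp: vscale_def fun_eq_iff)

lemma lc_single: assumes "i \<in> I" "finite I" shows "lc I (\<lambda>k. if k = i then 1 else 0) g = g i"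
proof (rule ext)
  fix x
  have "lc I (\<lambda>k. if k = i then 1 else 0) g x = (\<Sum>k\<in>I. if k = i then g k x else 0)"
    unfolding lc_def by (rule sum.cong) auto
  then show "lc I (\<lambda>k. if k = i then 1 else 0) g x = g i x" using assms by simp
qed

lemma lc_sum_coeff: "finite I \<Longrightarrow> finite J \<Longrightarrow> lc I c (\<lambda>i. lc J (d i) h) = lc J (\<lambda>j. \<Sum>i\<in>I. c i * d i j) h"
proof (rule ext)
  fix x
  have "(\<Sum>i\<in>I. c i * (\<Sum>j\<in>J. d i j * h j x)) = (\<Sum>i\<in>I. \<Sum>j\<in>J. c i * d i j * h j x)"
    by (simp add: sum_distrib_left mult.assoc)
  also have "\<dots> = (\<Sum>j\<in>J. \<Sum>i\<in>I. c i * d i j * h j x)" by (rule sum.swap)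
  also have "\<dots> = (\<Sum>j\<in>J. (\<Sum>i\<in>I. c i * d i j) * h j x)" by (simp add: sum_distrib_right)
  finally show "lc I c (\<lambda>i. lc J (d i) h) x = lc J (\<lambda>j. \<Sum>i\<in>I. c i * d i j) h x" unfolding lc_def .
qed

locale qctx =
  fixes n :: nat and Q :: "(nat \<Rightarrow> 'a::field) \<Rightarrow> 'a"
  assumes qf: "is_qform (n, Q)"
begin

abbreviation V where "V \<equiv> vecs n"

lemma Q_scale: "x \<in> V \<Longrightarrow> Q (vscale c x) = c^2 * Q x" using qf unfolding is_qform_def by simp
lemma polar_add1: "x \<in> V \<Longrightarrow> y \<in> V \<Longrightarrow> z \<in> V \<Longrightarrow> polar Q (vadd x y) z = polar Q x z + polar Q y z"
  using qf unfolding is_qform_def by simp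
lemma polar_scale1: "x \<in> V \<Longrightarrow> y \<in> V \<Longrightarrow> polar Q (vscale c x) y = c * polar Q x y"
  using qf unfolding is_qform_def by simp
lemma vadd_comm: "vadd x y = vadd y x" by (simp add: vadd_def add.commute fun_eq_iff)
lemma polar_sym: "polar Q x y = polar Q y x" unfolding polar_def by (simp add: vadd_comm)
lemma polar_add2: "x \<in> V \<Longrightarrow> y \<in> V \<Longrightarrow> z \<in> V \<Longrightarrow> polar Q z (vadd x y) = polar Q z x + polar Q z y"
  by (simp add: polar_sym[of z] polar_add1)
lemma polar_scale2: "x \<in> V \<Longrightarrow> y \<in> V \<Longrightarrow> polar Q y (vscale c x) = c * polar Q y x"
  by (simp add: polar_sym[of y] polar_scale1)
lemma Q_zero: "Q zv = 0"
proof -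
  have "zv \<in> V" by (simp add: vecs_def)
  then show ?thesis using Q_scale[of zv 0] by simp
qed
lemma polar_zero1: "z \<in> V \<Longrightarrow> polar Q zv z = 0"
  using polar_scale1[of z z 0] by simp
lemma polar_zero2: "z \<in> V \<Longrightarrow> polar Q z zv = 0"
  by (simp add: polar_sym[of z] polar_zero1)
lemma Q_add: "Q (vadd x y) = Q x + Q y + polar Q x y" unfolding polar_def by simp
lemma polar_self: "x \<in> V \<Longrightarrow> polar Q x x = 2 * Q x"
proof -
  assume x: "x \<in> V"
  have "vadd x x = vscale 2 x" by (simp add: vadd_def vscale_def fun_eq_iff)
  then have "Q (vadd x x) = 4 * Q x" using Q_scale[OF x, of 2] by simp
  then show ?thesis unfolding polar_def by simp
qed

lemma polar_lc1: assumes "finite I" "\<And>i. i \<in> I \<Longrightarrow> g i \<in> V" "z \<in> V"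
  shows "polar Q (lc I c g) z = (\<Sum>i\<in>I. c i * polar Q (g i) z)"
  using assms
proof (induction I rule: finite_induct)
  case empty then show ?case using polar_zero1 by simp
next
  case (insert i I)
  have g: "g i \<in> V" "lc I c g \<in> V" using insert lc_vecs[of I g n c] by auto
  show ?case unfolding lc_insert[OF insert(1,2)]
    using polar_add1[OF vscale_vecs[OF g(1)] g(2) insert(5)] polar_scale1[OF g(1) insert(5)] insert by simp
qed

lemma polar_lc2: assumes "finite I" "\<And>i. i \<in> I \<Longrightarrow> g i \<in> V" "z \<in> V"
  shows "polar Q z (lc I c g) = (\<Sum>i\<in>I. c i * polar Q z (g i))"
  using polar_lc1[OF assms] by (simp add: polar_sym[of z])

end



lemma vgt_sum: assumes "valuation v" "finite I" "sum f I \<noteq> 0" "\<And>i. i \<in> I \<Longrightarrow> f i \<noteq> 0 \<Longrightarrow> l < v (f i)"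
  shows "l < v (sum f I)"
  using val_sum_exists[OF assms(1-3)] assms(4) by (meson order_less_le_trans)

locale fctx = cctx v \<gamma> + qctx n Q
  for v :: "'a::field \<Rightarrow> 'g::linordered_ab_group_add" and \<gamma> n Q +
  fixes \<alpha> :: "(nat \<Rightarrow> 'a) \<Rightarrow> 'g"
  assumes vn: "vnorm v n \<alpha>"
    and cA: "\<And>x y. x \<in> V \<Longrightarrow> y \<in> V \<Longrightarrow> x \<noteq> zv \<Longrightarrow> y \<noteq> zv \<Longrightarrow> polar Q x y \<noteq> 0 \<Longrightarrow> \<alpha> x + \<alpha> y + \<gamma> \<le> v (polar Q x y)"
    and cB: "\<And>x. x \<in> V \<Longrightarrow> x \<noteq> zv \<Longrightarrow> Q x \<noteq> 0 \<Longrightarrow> \<alpha> x + \<alpha> x \<le> v (Q x)"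
begin

lemma al_scale: "x \<in> V \<Longrightarrow> x \<noteq> zv \<Longrightarrow> c \<noteq> 0 \<Longrightarrow> \<alpha> (vscale c x) = v c + \<alpha> x"
  using vn unfolding vnorm_def by blast

lemma al_ult: "x \<in> V \<Longrightarrow> y \<in> V \<Longrightarrow> x \<noteq> zv \<Longrightarrow> y \<noteq> zv \<Longrightarrow> vadd x y \<noteq> zv \<Longrightarrow> min (\<alpha> x) (\<alpha> y) \<le> \<alpha> (vadd x y)"
  using vn unfolding vnorm_def by blast

lemma al_lc_ge: assumes "finite I" "\<And>i. i \<in> I \<Longrightarrow> g i \<in> V" "\<And>i. i \<in> I \<Longrightarrow> g i \<noteq> zv"
  "lc I c g \<noteq> zv" "\<And>i. i \<in> I \<Longrightarrow> c i \<noteq> 0 \<Longrightarrow> l \<le> v (c i) + \<alpha> (g i)"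
  shows "l \<le> \<alpha> (lc I c g)"
  using assms
proof (induction I rule: finite_induct)
  case empty then show ?case by simp
next
  case (insert i I)
  have gi: "g i \<in> V" "g i \<noteq> zv" using insert by auto
  have lI: "lc I c g \<in> V" using insert lc_vecs[of I g n c] by auto
  note e = lc_insert[OF insert(1,2), of c g]
  show ?case
  proof (cases "c i = 0")
    case True
    then have eq: "lc (insert i I) c g = lc I c g" unfolding e by simp
    have "l \<le> \<alpha> (lc I c g)"
      by (rule insert.IH) (use insert.prems eq in auto)
    then show ?thesis using eq by simp
  next
    case ci: False
    have s: "\<alpha> (vscale (c i) (g i)) = v (c i) + \<alpha> (g i)" using al_scale[OF gi ci] .
    show ?thesis
    proof (cases "lc I c g = zv")
      case True
      then show ?thesis unfolding e using s insert.prems(4) ci by simp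
    next
      case False
      have ih: "l \<le> \<alpha> (lc I c g)" by (rule insert.IH) (use insert.prems False in auto)
      have nz: "vadd (vscale (c i) (g i)) (lc I c g) \<noteq> zv" using insert.prems(3) e by simp
      have "min (\<alpha> (vscale (c i) (g i))) (\<alpha> (lc I c g)) \<le> \<alpha> (vadd (vscale (c i) (g i)) (lc I c g))"
        by (rule al_ult[OF vscale_vecs[OF gi(1)] lI vscale_nz[OF ci gi(2)] False nz])
      then have "min (\<alpha> (vscale (c i) (g i))) (\<alpha> (lc I c g)) \<le> \<alpha> (lc (insert i I) c g)" unfolding e .
      moreover have "l \<le> min (\<alpha> (vscale (c i) (g i))) (\<alpha> (lc I c g))"
        using ih s insert.prems(4)[of i] ci by simp
      ultimately show ?thesis by (rule order_trans[rotated])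
    qed
  qed
qed

definition splitf :: "nat set \<Rightarrow> (nat \<Rightarrow> nat \<Rightarrow> 'a) \<Rightarrow> bool" where
  "splitf I g \<longleftrightarrow> finite I \<and> (\<forall>i\<in>I. g i \<in> V) \<and>
     (\<forall>c. (\<exists>i\<in>I. c i \<noteq> 0) \<longrightarrow> lc I c g \<noteq> zv \<and> (\<forall>i\<in>I. c i \<noteq> 0 \<longrightarrow> \<alpha> (lc I c g) \<le> v (c i) + \<alpha> (g i)))"

definition spn :: "nat set \<Rightarrow> (nat \<Rightarrow> nat \<Rightarrow> 'a) \<Rightarrow> (nat \<Rightarrow> 'a) set" where
  "spn I g = {lc I c g | c. True}"

definition cspan :: "nat set \<Rightarrow> (nat \<Rightarrow> nat \<Rightarrow> 'a) \<Rightarrow> bool" where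
  "cspan I g \<longleftrightarrow> (\<forall>x\<in>spn I g. x \<noteq> zv \<longrightarrow>
     (\<exists>y\<in>spn I g. y \<noteq> zv \<and> polar Q x y \<noteq> 0 \<and> v (polar Q x y) = \<alpha> x + \<alpha> y + \<gamma>))"

lemma splitf_nz: assumes "splitf I g" "i \<in> I" shows "g i \<noteq> zv"
proof -
  have f: "finite I" using assms unfolding splitf_def by blast
  have "lc I (\<lambda>k. if k = i then 1 else 0) g \<noteq> zv" using assms unfolding splitf_def by auto
  moreover have "lc I (\<lambda>k. if k = i then 1 else 0) g = g i" by (rule lc_single[OF assms(2) f])
  ultimately show ?thesis by simp
qed

lemma splitf_vecs: "splitf I g \<Longrightarrow> i \<in> I \<Longrightarrow> g i \<in> V" unfolding splitf_def by blast
lemma splitf_fin: "splitf I g \<Longrightarrow> finite I" unfolding splitf_def by blast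

lemma spn_vecs: "splitf I g \<Longrightarrow> z \<in> spn I g \<Longrightarrow> z \<in> V"
proof -
  assume s: "splitf I g" and z: "z \<in> spn I g"
  then obtain c where "z = lc I c g" unfolding spn_def by blast
  then show "z \<in> V" using lc_vecs[OF splitf_fin[OF s], of g n c] splitf_vecs[OF s] by blast
qed

lemma gen_of_pair: assumes "x \<in> V" "y \<in> V" "x \<noteq> zv" "y \<noteq> zv" "\<alpha> x + \<alpha> y + \<gamma> = 0"
  shows "gen_cond v \<gamma> (Q x) (Q y)"
proof (cases "Q x = 0 \<or> Q y = 0")
  case True then show ?thesis by (auto simp: gen_cond_def)
next
  case False
  then have "Q x \<noteq> 0" "Q y \<noteq> 0" by auto
  then have h1: "\<alpha> x + \<alpha> x \<le> v (Q x)" and h2: "\<alpha> y + \<alpha> y \<le> v (Q y)" using cB assms by auto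
  have g: "\<gamma> = - \<alpha> x - \<alpha> y" using assms(5) by (simp add: algebra_simps eq_neg_iff_add_eq_0)
  have "- (\<gamma> + \<gamma>) \<le> v (Q x) + v (Q y)"
    by (rule le_comb2[OF h1 h2]) (simp add: g algebra_simps)
  then show ?thesis by (simp add: gen_cond_def)
qed

end


lemma lt_comb2: fixes A :: "'g::linordered_ab_group_add"
  assumes "a1 < b1" "a2 \<le> b2" "(b1 - a1) + (b2 - a2) = B - A" shows "A < B"
proof -
  have "0 < (b1 - a1) + (b2 - a2)" using assms(1,2) by (simp add: add_pos_nonneg)
  then show ?thesis using assms(3) by simp
qed

context fctx begin

lemma ind_spn: "finite I \<Longrightarrow> i \<in> I \<Longrightarrow> g i \<in> spn I g"
  unfolding spn_def using lc_single[of i I g] by (metis (mono_tags, lifting) mem_Collect_eq)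

lemma step_pair: assumes sp: "splitf I g" and cs: "cspan I g" and i0: "i0 \<in> I"
  shows "\<exists>j\<in>I. j \<noteq> i0 \<and> polar Q (g i0) (g j) \<noteq> 0 \<and> v (polar Q (g i0) (g j)) = \<alpha> (g i0) + \<alpha> (g j) + \<gamma>"
proof -
  define x where "x = g i0"
  have fin: "finite I" using splitf_fin[OF sp] .
  have gV: "\<And>i. i \<in> I \<Longrightarrow> g i \<in> V" using splitf_vecs[OF sp] .
  have xV: "x \<in> V" and xn: "x \<noteq> zv" unfolding x_def using gV[OF i0] splitf_nz[OF sp i0] by auto
  have "x \<in> spn I g" unfolding x_def by (rule ind_spn[OF fin i0])
  then obtain y where y: "y \<in> spn I g" "y \<noteq> zv" "polar Q x y \<noteq> 0" "v (polar Q x y) = \<alpha> x + \<alpha> y + \<gamma>"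
    using cs xn unfolding cspan_def by blast
  obtain d where d: "y = lc I d g" using y(1) unfolding spn_def by blast
  have py: "polar Q x y = (\<Sum>i\<in>I. d i * polar Q x (g i))"
    unfolding d by (rule polar_lc2[OF fin gV xV])
  obtain j where j: "j \<in> I" "d j * polar Q x (g j) \<noteq> 0" "v (d j * polar Q x (g j)) \<le> v (polar Q x y)"
    using val_sum_exists[OF val fin, of "\<lambda>i. d i * polar Q x (g i)"] y(3) unfolding py by auto
  have dj: "d j \<noteq> 0" and Pj: "polar Q x (g j) \<noteq> 0" using j(2) by auto
  have vdP: "v (d j * polar Q x (g j)) = v (d j) + v (polar Q x (g j))" using val_mult[OF val dj Pj] .
  have ay: "\<alpha> y \<le> v (d j) + \<alpha> (g j)" using sp dj j(1) unfolding splitf_def d by blast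
  have up: "v (polar Q x (g j)) \<le> \<alpha> x + \<alpha> (g j) + \<gamma>"
  proof -
    have h1: "v (d j) + v (polar Q x (g j)) \<le> \<alpha> x + \<alpha> y + \<gamma>" using j(3) vdP y(4) by simp
    show ?thesis by (rule le_comb2[OF h1 ay]) (simp add: algebra_simps)
  qed
  have gjn: "g j \<noteq> zv" using splitf_nz[OF sp j(1)] .
  have lo: "\<alpha> x + \<alpha> (g j) + \<gamma> \<le> v (polar Q x (g j))" using cA[OF xV gV[OF j(1)] xn gjn Pj] .
  have eq: "v (polar Q x (g j)) = \<alpha> x + \<alpha> (g j) + \<gamma>" using up lo by simp
  have "j \<noteq> i0"
  proof
    assume ji: "j = i0"
    then have P: "polar Q x (g j) = 2 * Q x" using polar_self[OF xV] unfolding x_def by simp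
    then have nz: "(2::'a) \<noteq> 0" "Q x \<noteq> 0" using Pj by auto
    have h1: "\<gamma> < v 2" using vge2s nz(1) by blast
    have h2: "\<alpha> x + \<alpha> x \<le> v (Q x)" using cB[OF xV xn nz(2)] .
    have "\<alpha> x + \<alpha> (g j) + \<gamma> < v (polar Q x (g j))"
      unfolding P val_mult[OF val nz] using ji unfolding x_def
      by (intro lt_comb2[OF h1 h2]) (simp add: algebra_simps x_def)
    then show False using eq by simp
  qed
  then show ?thesis using j(1) Pj eq unfolding x_def by blast
qed

end


lemma vge_neg: "valuation v \<Longrightarrow> vge v l z \<Longrightarrow> vge v l (- z)"
  unfolding vge_def using val_neg[of v z] by auto

lemma vge_inv: "valuation v \<Longrightarrow> v d = 0 \<Longrightarrow> vge v 0 (inverse d)"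
  unfolding vge_def using val_inv by fastforce

locale stepctx = fctx +
  fixes I g i0 j
  assumes sp: "splitf I g" and cs: "cspan I g" and i0: "i0 \<in> I" and jI: "j \<in> I" and ji: "j \<noteq> i0"
    and Pn: "polar Q (g i0) (g j) \<noteq> 0" and Peq: "v (polar Q (g i0) (g j)) = \<alpha> (g i0) + \<alpha> (g j) + \<gamma>"
begin

definition "x = g i0"
definition "\<beta> = polar Q x (g j)"
definition "y0 = vscale (inverse \<beta>) (g j)"
definition "I' = I - {i0, j}"
definition "Aa = polar Q x x"
definition "Bb = polar Q y0 y0"
definition "Dl = Aa * Bb - 1"
definition "s i = (Bb * polar Q (g i) x - polar Q (g i) y0) / Dl" for i
definition "t i = (Aa * polar Q (g i) y0 - polar Q (g i) x) / Dl" for i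
definition "g' i = vadd (g i) (vadd (vscale (- s i) x) (vscale (- t i) y0))" for i
definition "g2 i = (if i = i0 then x else if i = j then y0 else g' i)" for i

lemma fin: "finite I" using splitf_fin[OF sp] .
lemma gV: "i \<in> I \<Longrightarrow> g i \<in> V" using splitf_vecs[OF sp] .
lemma gN: "i \<in> I \<Longrightarrow> g i \<noteq> zv" using splitf_nz[OF sp] .
lemma xV: "x \<in> V" and xN: "x \<noteq> zv" unfolding x_def using gV[OF i0] gN[OF i0] by auto
lemma bN: "\<beta> \<noteq> 0" unfolding \<beta>_def x_def using Pn .
lemma y0V: "y0 \<in> V" unfolding y0_def using gV[OF jI] by blast
lemma y0N: "y0 \<noteq> zv" unfolding y0_def using vscale_nz[OF _ gN[OF jI]] bN by simp
lemma pxy: "polar Q x y0 = 1" unfolding y0_def using polar_scale2[OF gV[OF jI] xV] bN by (simp add: \<beta>_def)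
lemma pyx: "polar Q y0 x = 1" using pxy polar_sym by metis
lemma ay0: "\<alpha> y0 = \<alpha> (g j) - v \<beta>"
  unfolding y0_def using al_scale[OF gV[OF jI] gN[OF jI]] bN val_inv[OF val bN] by simp
lemma sum0: "\<alpha> x + \<alpha> y0 + \<gamma> = 0"
  using ay0 Peq unfolding \<beta>_def x_def by (simp add: algebra_simps)
lemma gen_xy: "gen_cond v \<gamma> (Q x) (Q y0)" by (rule gen_of_pair[OF xV y0V xN y0N sum0])
lemma Aa: "Aa = 2 * Q x" unfolding Aa_def using polar_self[OF xV] .
lemma Bb: "Bb = 2 * Q y0" unfolding Bb_def using polar_self[OF y0V] .
lemma DlN: "Dl \<noteq> 0"
proof -
  have "4 * Q x * Q y0 - 1 \<noteq> 0" using gen_D[OF gen_xy] .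
  then show ?thesis unfolding Dl_def Aa Bb by (simp add: algebra_simps)
qed

lemma vDl: "v Dl = 0"
proof -
  have e: "Dl = -1 - (- (Aa * Bb))" unfolding Dl_def by simp
  have "-1 - (- (Aa * Bb)) \<noteq> 0 \<and> v (-1 - (- (Aa * Bb))) = v (-1::'a)"
  proof (rule val_diff_eq[OF val])
    show "(-1::'a) \<noteq> 0" by simp
    assume u: "- (Aa * Bb) \<noteq> 0"
    then have "Aa \<noteq> 0" "Bb \<noteq> 0" by auto
    then have nz: "(2::'a) \<noteq> 0" "Q x \<noteq> 0" "Q y0 \<noteq> 0" unfolding Aa Bb by auto
    have aN: "Aa \<noteq> 0" "Bb \<noteq> 0" using u by auto
    have "v (- (Aa * Bb)) = v (Aa * Bb)" by (rule val_neg[OF val])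
    also have "\<dots> = v Aa + v Bb" by (rule val_mult[OF val aN])
    also have "v Aa = v 2 + v (Q x)" unfolding Aa by (rule val_mult[OF val nz(1,2)])
    also have "v Bb = v 2 + v (Q y0)" unfolding Bb by (rule val_mult[OF val nz(1,3)])
    finally have vu: "v (- (Aa * Bb)) = v 2 + v (Q x) + (v 2 + v (Q y0))" .
    have h: "- (\<gamma> + \<gamma>) \<le> v (Q x) + v (Q y0)" using gen_xy nz unfolding gen_cond_def by auto
    have g: "\<gamma> < v 2" using vge2s nz by blast
    have "0 < v (- (Aa * Bb))" unfolding vu
      by (rule lt_comb3[OF g less_imp_le[OF g] h]) (simp add: algebra_simps)
    then show "v (-1::'a) < v (- (Aa * Bb))" using val_neg[OF val, of 1] val_one[OF val] by simp
  qed
  then show ?thesis unfolding e using val_neg[OF val, of 1] val_one[OF val] by simp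
qed

lemma I'sub: "I' \<subseteq> I" unfolding I'_def by auto
lemma I'fin: "finite I'" using fin I'sub finite_subset by blast
lemma I_eq: "I = insert i0 (insert j I')" unfolding I'_def using i0 jI by auto
lemma i0n: "i0 \<notin> insert j I'" unfolding I'_def using ji by auto
lemma jn: "j \<notin> I'" unfolding I'_def by auto

lemma g'V: "i \<in> I' \<Longrightarrow> g' i \<in> V" unfolding g'_def using gV I'sub xV y0V by blast

lemma orth: assumes i: "i \<in> I'" shows "polar Q (g' i) x = 0" "polar Q (g' i) y0 = 0"
proof -
  have gi: "g i \<in> V" using gV I'sub i by blast
  have ex: "polar Q (g' i) x = polar Q (g i) x - s i * Aa - t i"
    unfolding g'_def Aa_def
    using polar_add1[OF gi _ xV, of "vadd (vscale (- s i) x) (vscale (- t i) y0)"]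
      polar_add1[OF vscale_vecs[OF xV] vscale_vecs[OF y0V] xV, of "- s i" "- t i"]
      polar_scale1[OF xV xV] polar_scale1[OF y0V xV] pyx xV y0V by (auto simp: algebra_simps)
  have ey: "polar Q (g' i) y0 = polar Q (g i) y0 - s i - t i * Bb"
    unfolding g'_def Bb_def
    using polar_add1[OF gi _ y0V, of "vadd (vscale (- s i) x) (vscale (- t i) y0)"]
      polar_add1[OF vscale_vecs[OF xV] vscale_vecs[OF y0V] y0V, of "- s i" "- t i"]
      polar_scale1[OF xV y0V] polar_scale1[OF y0V y0V] pxy xV y0V by (auto simp: algebra_simps)
  show "polar Q (g' i) x = 0" unfolding ex s_def t_def using DlN
    by (simp add: field_simps Dl_def; simp add: algebra_simps)
  show "polar Q (g' i) y0 = 0" unfolding ey s_def t_def using DlN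
    by (simp add: field_simps Dl_def; simp add: algebra_simps)
qed

lemma est: assumes i: "i \<in> I'" shows "vge v (\<alpha> (g i) - \<alpha> x) (s i)" "vge v (\<alpha> (g i) - \<alpha> y0) (t i)"
proof -
  have iI: "i \<in> I" using i I'sub by blast
  have gi: "g i \<in> V" "g i \<noteq> zv" using gV[OF iI] gN[OF iI] by auto
  have p: "vge v (\<alpha> (g i) + \<alpha> x + \<gamma>) (polar Q (g i) x)"
    unfolding vge_def using cA[OF gi(1) xV gi(2) xN] by blast
  have q: "vge v (\<alpha> (g i) + \<alpha> y0 + \<gamma>) (polar Q (g i) y0)"
    unfolding vge_def using cA[OF gi(1) y0V gi(2) y0N] by blast
  have qx: "vge v (\<alpha> x + \<alpha> x) (Q x)" unfolding vge_def using cB[OF xV xN] by blast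
  have qy: "vge v (\<alpha> y0 + \<alpha> y0) (Q y0)" unfolding vge_def using cB[OF y0V y0N] by blast
  have g: "\<gamma> = - \<alpha> x - \<alpha> y0" using sum0 by (simp add: algebra_simps eq_neg_iff_add_eq_0)
  have iD: "vge v 0 (inverse Dl)" by (rule vge_inv[OF val vDl])
  have B: "vge v (\<gamma> + (\<alpha> y0 + \<alpha> y0)) Bb" unfolding Bb by (rule vge_mult[OF val vge2 qy])
  have A: "vge v (\<gamma> + (\<alpha> x + \<alpha> x)) Aa" unfolding Aa by (rule vge_mult[OF val vge2 qx])
  have s1: "vge v (\<alpha> (g i) - \<alpha> x) (Bb * polar Q (g i) x - polar Q (g i) y0)"
    unfolding diff_conv_add_uminus[of "Bb * polar Q (g i) x"]
    apply (rule vge_add[OF val])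
     apply (rule vge_eq[OF _ vge_mult[OF val B p]], simp add: g algebra_simps)
    by (rule vge_eq[OF _ vge_neg[OF val q]], simp add: g algebra_simps)
  show "vge v (\<alpha> (g i) - \<alpha> x) (s i)"
    unfolding s_def divide_inverse
    by (rule vge_eq[OF _ vge_mult[OF val s1 iD]]) simp
  have t1: "vge v (\<alpha> (g i) - \<alpha> y0) (Aa * polar Q (g i) y0 - polar Q (g i) x)"
    unfolding diff_conv_add_uminus[of "Aa * polar Q (g i) y0"]
    apply (rule vge_add[OF val])
     apply (rule vge_eq[OF _ vge_mult[OF val A q]], simp add: g algebra_simps)
    by (rule vge_eq[OF _ vge_neg[OF val p]], simp add: g algebra_simps)
  show "vge v (\<alpha> (g i) - \<alpha> y0) (t i)"
    unfolding t_def divide_inverse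
    by (rule vge_eq[OF _ vge_mult[OF val t1 iD]]) simp
qed

end


context stepctx begin

definition "cf c i = (if i = i0 then c i0 - (\<Sum>k\<in>I'. c k * s k)
   else if i = j then (c j - (\<Sum>k\<in>I'. c k * t k)) * inverse \<beta> else c i)" for c i
definition "cb c i = (if i = i0 then c i0 + (\<Sum>k\<in>I'. c k * s k)
   else if i = j then \<beta> * c j + (\<Sum>k\<in>I'. c k * t k) else c i)" for c i

lemma g2_i0: "g2 i0 = x" unfolding g2_def by simp
lemma g2_j: "g2 j = y0" unfolding g2_def using ji by simp
lemma g2_I': "k \<in> I' \<Longrightarrow> g2 k = g' k" unfolding g2_def I'_def by auto

lemma sum_I: "(\<Sum>i\<in>I. f i) = f i0 + (f j + (\<Sum>k\<in>I'. f k))"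
proof -
  have "(\<Sum>i\<in>I. f i) = (\<Sum>i\<in>insert i0 (insert j I'). f i)" using I_eq by simp
  also have "\<dots> = f i0 + (f j + (\<Sum>k\<in>I'. f k))" using i0n jn I'fin by simp
  finally show ?thesis .
qed

lemma lc_g2_split: "lc I c g2 = vadd (vscale (c i0) x) (vadd (vscale (c j) y0) (lc I' c g'))"
proof (rule ext)
  fix m
  have e: "(\<Sum>k\<in>I'. c k * g2 k m) = (\<Sum>k\<in>I'. c k * g' k m)" by (rule sum.cong) (simp_all add: g2_I')
  show "lc I c g2 m = vadd (vscale (c i0) x) (vadd (vscale (c j) y0) (lc I' c g')) m"
    unfolding lc_def sum_I[of "\<lambda>i. c i * g2 i m"] e
    by (simp add: g2_i0 g2_j vadd_def vscale_def)
qed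

lemma lc_g2: "lc I c g2 = lc I (cf c) g"
proof (rule ext)
  fix m
  have cfi0: "cf c i0 = c i0 - (\<Sum>k\<in>I'. c k * s k)" unfolding cf_def by simp
  have cfj: "cf c j = (c j - (\<Sum>k\<in>I'. c k * t k)) * inverse \<beta>" unfolding cf_def using ji by simp
  have cfk: "\<And>k. k \<in> I' \<Longrightarrow> cf c k = c k" unfolding cf_def I'_def by auto
  have ym: "y0 m = inverse \<beta> * g j m" unfolding y0_def vscale_def by simp
  have s1: "(\<Sum>k\<in>I'. c k * g' k m) = (\<Sum>k\<in>I'. c k * g k m) - (\<Sum>k\<in>I'. c k * s k) * x m - (\<Sum>k\<in>I'. c k * t k) * y0 m"
    unfolding g'_def vadd_def vscale_def
    by (simp add: algebra_simps sum.distrib sum_subtractf sum_distrib_right sum_distrib_left mult.left_commute)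
  have s2: "(\<Sum>k\<in>I'. cf c k * g k m) = (\<Sum>k\<in>I'. c k * g k m)" using cfk by simp
  have gj: "g j m = \<beta> * y0 m" unfolding ym using bN by simp
  have c2: "(c j - (\<Sum>k\<in>I'. c k * t k)) * inverse \<beta> * (\<beta> * y0 m) = (c j - (\<Sum>k\<in>I'. c k * t k)) * y0 m"
    using bN by simp
  have "lc I c g2 m = c i0 * x m + (c j * y0 m + (\<Sum>k\<in>I'. c k * g' k m))"
    unfolding lc_def sum_I[of "\<lambda>i. c i * g2 i m"]
    using g2_I' by (simp add: g2_i0 g2_j)
  also have "\<dots> = (c i0 - (\<Sum>k\<in>I'. c k * s k)) * x m + ((c j - (\<Sum>k\<in>I'. c k * t k)) * y0 m + (\<Sum>k\<in>I'. c k * g k m))"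
    unfolding s1 by (simp add: algebra_simps)
  also have "\<dots> = lc I (cf c) g m"
    unfolding lc_def sum_I[of "\<lambda>i. cf c i * g i m"] s2 cfi0 cfj gj c2 by (simp add: x_def)
  finally show "lc I c g2 m = lc I (cf c) g m" .
qed

lemma cf_cb: "i \<in> I \<Longrightarrow> cf (cb c) i = c i"
proof -
  assume i: "i \<in> I"
  have cbk: "\<And>k. k \<in> I' \<Longrightarrow> cb c k = c k" unfolding cb_def I'_def by auto
  have s: "(\<Sum>k\<in>I'. cb c k * s k) = (\<Sum>k\<in>I'. c k * s k)" "(\<Sum>k\<in>I'. cb c k * t k) = (\<Sum>k\<in>I'. c k * t k)"
    using cbk by simp_all
  show ?thesis using i bN ji unfolding cf_def s unfolding cb_def I'_def by auto
qed

lemma lc_g: "lc I c g = lc I (cb c) g2"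
  unfolding lc_g2 by (rule lc_cong) (simp add: cf_cb)

lemma g2V: "i \<in> I \<Longrightarrow> g2 i \<in> V"
  unfolding g2_def using xV y0V g'V unfolding I'_def by auto

lemma g'_lc: assumes i: "i \<in> I'"
  shows "g' i = lc I (\<lambda>k. if k = i then 1 else if k = i0 then - s i else if k = j then - t i * inverse \<beta> else 0) g"
proof (rule ext)
  fix m
  have iI: "i \<noteq> i0" "i \<noteq> j" "i \<in> I" using i unfolding I'_def by auto
  have "lc I (\<lambda>k. if k = i then 1 else if k = i0 then - s i else if k = j then - t i * inverse \<beta> else 0) g m
     = (\<Sum>k\<in>I. (if k = i then g i m else 0) + ((if k = i0 then - s i * g i0 m else 0) + (if k = j then - t i * inverse \<beta> * g j m else 0)))"
    unfolding lc_def by (rule sum.cong) (use iI ji in auto)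
  also have "\<dots> = g i m + (- s i * g i0 m + - t i * inverse \<beta> * g j m)"
    using fin iI i0 jI by (simp add: sum.distrib)
  finally show "g' i m = lc I (\<lambda>k. if k = i then 1 else if k = i0 then - s i else if k = j then - t i * inverse \<beta> else 0) g m"
    unfolding g'_def vadd_def vscale_def y0_def x_def by (simp add: algebra_simps)
qed

lemma al_g': assumes i: "i \<in> I'" shows "g' i \<noteq> zv" "\<alpha> (g i) \<le> \<alpha> (g' i)"
proof -
  define e where "e = (\<lambda>k. if k = i then 1 else if k = i0 then - s i else if k = j then - t i * inverse \<beta> else (0::'a))"
  have iI: "i \<noteq> i0" "i \<noteq> j" "i \<in> I" using i unfolding I'_def by auto
  have ge: "g' i = lc I e g" unfolding e_def by (rule g'_lc[OF i])
  have "e i \<noteq> 0" unfolding e_def by simp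
  then have "\<exists>k\<in>I. e k \<noteq> 0" using iI by blast
  then have "lc I e g \<noteq> zv" using sp unfolding splitf_def by blast
  then show nz: "g' i \<noteq> zv" unfolding ge .
  show "\<alpha> (g i) \<le> \<alpha> (g' i)" unfolding ge
  proof (rule al_lc_ge[OF fin gV gN])
    show "lc I e g \<noteq> zv" using nz ge by simp
    fix k assume k: "k \<in> I" "e k \<noteq> 0"
    consider "k = i" | "k = i0" "k \<noteq> i" | "k = j" "k \<noteq> i" "k \<noteq> i0" | "k \<noteq> i" "k \<noteq> i0" "k \<noteq> j" by blast
    then show "\<alpha> (g i) \<le> v (e k) + \<alpha> (g k)"
    proof cases
      case 1 then show ?thesis unfolding e_def using val_one[OF val] by simp
    next
      case 2
      then have ek: "e k = - s i" "s i \<noteq> 0" using k(2) unfolding e_def by auto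
      have "\<alpha> (g i) - \<alpha> x \<le> v (s i)" using est(1)[OF i] ek(2) unfolding vge_def by blast
      then show ?thesis using ek 2 val_neg[OF val] unfolding x_def by (simp add: diff_le_eq)
    next
      case 3
      then have ek: "e k = - t i * inverse \<beta>" "t i \<noteq> 0" using k(2) unfolding e_def by auto
      have h: "\<alpha> (g i) - \<alpha> y0 \<le> v (t i)" using est(2)[OF i] ek(2) unfolding vge_def by blast
      have ve: "v (e k) = v (t i) - v \<beta>" unfolding ek(1)
        using val_neg[OF val] val_mult[OF val] val_inv[OF val bN] ek(2) bN by simp
      have ag: "\<alpha> (g j) = \<alpha> y0 + v \<beta>" using ay0 by simp
      have "\<alpha> (g i) \<le> v (e k) + \<alpha> (g j)"
        by (rule le_comb1[OF h]) (simp add: ve ag algebra_simps)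
      then show ?thesis using 3 by simp
    next
      case 4 then show ?thesis using k(2) unfolding e_def by simp
    qed
  qed
qed

end


context fctx begin

lemma spn_I: "lc I c g \<in> spn I g" unfolding spn_def by blast

lemma splitf_D1: "splitf I g \<Longrightarrow> \<exists>i\<in>I. c i \<noteq> 0 \<Longrightarrow> lc I c g \<noteq> zv"
  unfolding splitf_def by (elim conjE allE[of _ c]) simp
lemma splitf_D2: "splitf I g \<Longrightarrow> i \<in> I \<Longrightarrow> c i \<noteq> 0 \<Longrightarrow> \<alpha> (lc I c g) \<le> v (c i) + \<alpha> (g i)"
  unfolding splitf_def by (elim conjE allE[of _ c]) auto

lemma splitf_sub: assumes s: "splitf I h" and J: "J \<subseteq> I" shows "splitf J h"
  unfolding splitf_def
proof (intro conjI allI impI ballI)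
  show fJ: "finite J" using splitf_fin[OF s] J finite_subset by blast
  show "\<And>i. i \<in> J \<Longrightarrow> h i \<in> V" using splitf_vecs[OF s] J by blast
  fix c :: "nat \<Rightarrow> 'a" assume c: "\<exists>i\<in>J. c i \<noteq> 0"
  define c0 where "c0 k = (if k \<in> J then c k else 0)" for k
  have e: "lc I c0 h = lc J c h"
  proof (rule ext)
    fix m
    have "(\<Sum>k\<in>I. c0 k * h k m) = (\<Sum>k\<in>J. c0 k * h k m)"
      by (rule sum.mono_neutral_right[OF splitf_fin[OF s] J]) (auto simp: c0_def)
    then show "lc I c0 h m = lc J c h m" unfolding lc_def c0_def by simp
  qed
  have c0: "\<exists>i\<in>I. c0 i \<noteq> 0" using c J unfolding c0_def by auto
  show "lc J c h \<noteq> zv" using splitf_D1[OF s c0] unfolding e .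
  fix i assume i: "i \<in> J" "c i \<noteq> 0"
  have ci: "c0 i = c i" "i \<in> I" using i J unfolding c0_def by auto
  then have "c0 i \<noteq> 0" using i by simp
  then have "\<alpha> (lc I c0 h) \<le> v (c0 i) + \<alpha> (h i)" by (rule splitf_D2[OF s ci(2)])
  then show "\<alpha> (lc J c h) \<le> v (c i) + \<alpha> (h i)" unfolding e ci(1) .
qed

lemma splitf_cong: "splitf I h \<Longrightarrow> (\<And>i. i \<in> I \<Longrightarrow> h i = h' i) \<Longrightarrow> splitf I h'"
proof -
  assume s: "splitf I h" and e: "\<And>i. i \<in> I \<Longrightarrow> h i = h' i"
  have l: "lc I c h = lc I c h'" for c by (rule lc_cong2) (simp add: e)
  show ?thesis using s e unfolding splitf_def l by auto
qed

end

context stepctx begin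

lemma cf_nz: assumes "\<exists>i\<in>I. c i \<noteq> 0" shows "\<exists>i\<in>I. cf c i \<noteq> 0"
proof (cases "\<exists>k\<in>I'. c k \<noteq> 0")
  case True
  then obtain k where k: "k \<in> I'" "c k \<noteq> 0" by blast
  then have "cf c k = c k" "k \<in> I" unfolding cf_def I'_def by auto
  then show ?thesis using k by (intro bexI[of _ k]) auto
next
  case False
  then have z: "(\<Sum>k\<in>I'. c k * s k) = 0" "(\<Sum>k\<in>I'. c k * t k) = 0" by auto
  have e: "cf c i0 = c i0" "cf c j = c j * inverse \<beta>" unfolding cf_def z using ji by auto
  from assms obtain i where i: "i \<in> I" "c i \<noteq> 0" by blast
  then have "i = i0 \<or> i = j" using False unfolding I'_def by blast
  then show ?thesis
  proof
    assume "i = i0" then have "cf c i0 \<noteq> 0" using e i by simp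
    then show ?thesis using i0 by blast
  next
    assume "i = j" then have "cf c j \<noteq> 0" using e i bN by simp
    then show ?thesis using jI by blast
  qed
qed

lemma split_g2: "splitf I g2"
  unfolding splitf_def
proof (intro conjI allI impI ballI)
  show "finite I" by (rule fin)
  show "\<And>i. i \<in> I \<Longrightarrow> g2 i \<in> V" by (rule g2V)
  fix c :: "nat \<Rightarrow> 'a" assume c: "\<exists>i\<in>I. c i \<noteq> 0"
  define z where "z = lc I c g2"
  have zc: "z = lc I (cf c) g" unfolding z_def by (rule lc_g2)
  have cfn: "\<exists>i\<in>I. cf c i \<noteq> 0" by (rule cf_nz[OF c])
  show "lc I c g2 \<noteq> zv" using splitf_D1[OF sp cfn] unfolding z_def[symmetric] zc .
  have hz: "\<And>k. k \<in> I \<Longrightarrow> cf c k \<noteq> 0 \<Longrightarrow> \<alpha> z \<le> v (cf c k) + \<alpha> (g k)"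
    unfolding zc by (rule splitf_D2[OF sp])
  have hz': "\<And>k. k \<in> I' \<Longrightarrow> c k \<noteq> 0 \<Longrightarrow> \<alpha> z \<le> v (c k) + \<alpha> (g k)"
  proof -
    fix k assume k: "k \<in> I'" "c k \<noteq> 0"
    then have "cf c k = c k" "k \<in> I" unfolding cf_def I'_def by auto
    then show "\<alpha> z \<le> v (c k) + \<alpha> (g k)" using hz[of k] k by simp
  qed
  fix i assume i: "i \<in> I" "c i \<noteq> 0"
  show "\<alpha> (lc I c g2) \<le> v (c i) + \<alpha> (g2 i)"
    unfolding z_def[symmetric]
  proof -
    consider "i \<in> I'" | "i = i0" | "i = j" using i unfolding I'_def by blast
    then show "\<alpha> z \<le> v (c i) + \<alpha> (g2 i)"
    proof cases
      case 1
      have a: "\<alpha> z \<le> v (c i) + \<alpha> (g i)" by (rule hz'[OF 1 i(2)])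
      have b: "v (c i) + \<alpha> (g i) \<le> v (c i) + \<alpha> (g' i)" using al_g'(2)[OF 1] by simp
      show ?thesis using order_trans[OF a b] g2_I'[OF 1] by simp
    next
      case 2
      show ?thesis
      proof (rule ccontr)
        assume "\<not> \<alpha> z \<le> v (c i) + \<alpha> (g2 i)"
        then have lt: "v (c i0) + \<alpha> x < \<alpha> z" using 2 g2_i0 by simp
        have ci0: "c i0 \<noteq> 0" using i 2 by simp
        have "(\<Sum>k\<in>I'. c k * s k) \<noteq> 0 \<Longrightarrow> v (c i0) < v (\<Sum>k\<in>I'. c k * s k)"
        proof (rule vgt_sum[OF val I'fin])
          fix k assume k: "k \<in> I'" "c k * s k \<noteq> 0"
          then have nz: "c k \<noteq> 0" "s k \<noteq> 0" by auto
          have h3: "\<alpha> (g k) - \<alpha> x \<le> v (s k)" using est(1)[OF k(1)] nz(2) unfolding vge_def by blast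
          show "v (c i0) < v (c k * s k)" unfolding val_mult[OF val nz]
            by (rule lt_comb3[OF lt hz'[OF k(1) nz(1)] h3]) (simp add: algebra_simps)
        qed
        from val_diff_eq[OF val ci0 this]
        have d: "cf c i0 \<noteq> 0" "v (cf c i0) = v (c i0)" unfolding cf_def by auto
        have "\<alpha> z \<le> v (c i0) + \<alpha> x" using hz[OF i0 d(1)] d(2) unfolding x_def by simp
        then show False using lt by simp
      qed
    next
      case 3
      show ?thesis
      proof (rule ccontr)
        assume "\<not> \<alpha> z \<le> v (c i) + \<alpha> (g2 i)"
        then have lt: "v (c j) + \<alpha> y0 < \<alpha> z" using 3 g2_j by simp
        have cj: "c j \<noteq> 0" using i 3 by simp
        have "(\<Sum>k\<in>I'. c k * t k) \<noteq> 0 \<Longrightarrow> v (c j) < v (\<Sum>k\<in>I'. c k * t k)"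
        proof (rule vgt_sum[OF val I'fin])
          fix k assume k: "k \<in> I'" "c k * t k \<noteq> 0"
          then have nz: "c k \<noteq> 0" "t k \<noteq> 0" by auto
          have h3: "\<alpha> (g k) - \<alpha> y0 \<le> v (t k)" using est(2)[OF k(1)] nz(2) unfolding vge_def by blast
          show "v (c j) < v (c k * t k)" unfolding val_mult[OF val nz]
            by (rule lt_comb3[OF lt hz'[OF k(1) nz(1)] h3]) (simp add: algebra_simps)
        qed
        from val_diff_eq[OF val cj this]
        have d0: "c j - (\<Sum>k\<in>I'. c k * t k) \<noteq> 0" "v (c j - (\<Sum>k\<in>I'. c k * t k)) = v (c j)" by auto
        have cfj: "cf c j = (c j - (\<Sum>k\<in>I'. c k * t k)) * inverse \<beta>" unfolding cf_def using ji by simp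
        have inz: "inverse \<beta> \<noteq> 0" using bN by simp
        have d: "cf c j \<noteq> 0" "v (cf c j) = v (c j) - v \<beta>"
          unfolding cfj using d0 inz val_mult[OF val d0(1) inz] val_inv[OF val bN] by auto
        have ag: "\<alpha> (g j) = \<alpha> y0 + v \<beta>" using ay0 by simp
        have "\<alpha> z \<le> v (c j) + \<alpha> y0" using hz[OF jI d(1)] d(2) ag by (simp add: algebra_simps)
        then show False using lt by simp
      qed
    qed
  qed
qed

lemma split_g': "splitf I' g'"
  by (rule splitf_cong[OF splitf_sub[OF split_g2 I'sub]]) (simp add: g2_I')

lemma orth_spn: assumes "z \<in> spn I' g'" shows "polar Q z x = 0" "polar Q z y0 = 0"
proof -
  obtain d where d: "z = lc I' d g'" using assms unfolding spn_def by blast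
  have "polar Q (lc I' d g') x = (\<Sum>i\<in>I'. d i * polar Q (g' i) x)" by (rule polar_lc1) (use I'fin g'V xV in auto)
  then show "polar Q z x = 0" unfolding d using orth(1) by simp
  have "polar Q (lc I' d g') y0 = (\<Sum>i\<in>I'. d i * polar Q (g' i) y0)" by (rule polar_lc1) (use I'fin g'V y0V in auto)
  then show "polar Q z y0 = 0" unfolding d using orth(2) by simp
qed

lemma spn'_sub: "spn I' g' \<subseteq> spn I g"
proof
  fix z assume "z \<in> spn I' g'"
  then obtain d where d: "z = lc I' d g'" unfolding spn_def by blast
  define d0 where "d0 k = (if k = i0 \<or> k = j then 0 else d k)" for k
  have "lc I' d0 g' = lc I' d g'" by (rule lc_cong) (use jn i0n in \<open>auto simp: d0_def\<close>)
  then have "lc I d0 g2 = z" unfolding lc_g2_split d using d0_def by simp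
  then have "z = lc I (cf d0) g" using lc_g2 by simp
  then show "z \<in> spn I g" using spn_I by simp
qed

lemma x_spn: "x \<in> spn I g" unfolding x_def by (rule ind_spn[OF fin i0])
lemma y0_spn: "y0 \<in> spn I g"
proof -
  have "lc I (\<lambda>k. if k = j then inverse \<beta> else 0) g = y0"
  proof (rule ext)
    fix m
    have "lc I (\<lambda>k. if k = j then inverse \<beta> else 0) g m = (\<Sum>k\<in>I. if k = j then inverse \<beta> * g k m else 0)"
      unfolding lc_def by (rule sum.cong) auto
    then show "lc I (\<lambda>k. if k = j then inverse \<beta> else 0) g m = y0 m"
      using fin jI unfolding y0_def vscale_def by simp
  qed
  then show ?thesis using spn_I[of I "\<lambda>k. if k = j then inverse \<beta> else 0" g] by simp
qed

lemma decomp_spn: assumes "z \<in> spn I g"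
  shows "\<exists>p q w. w \<in> spn I' g' \<and> z = vadd (vscale p x) (vadd (vscale q y0) w)"
proof -
  obtain e where e: "z = lc I e g" using assms unfolding spn_def by blast
  have "z = lc I (cb e) g2" unfolding e by (rule lc_g)
  then have "z = vadd (vscale (cb e i0) x) (vadd (vscale (cb e j) y0) (lc I' (cb e) g'))" using lc_g2_split by simp
  then show ?thesis using spn_I[of I' "cb e" g'] by blast
qed

lemma cspan': "cspan I' g'"
  unfolding cspan_def
proof (intro ballI impI)
  fix x' assume x': "x' \<in> spn I' g'" "x' \<noteq> zv"
  have x'V: "x' \<in> V" using spn_vecs[OF split_g' x'(1)] .
  have "x' \<in> spn I g" using spn'_sub x'(1) by blast
  then obtain y where y: "y \<in> spn I g" "y \<noteq> zv" "polar Q x' y \<noteq> 0" "v (polar Q x' y) = \<alpha> x' + \<alpha> y + \<gamma>"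
    using cs x'(2) unfolding cspan_def by blast
  obtain e where e: "y = lc I e g" using y(1) unfolding spn_def by blast
  define w where "w = lc I' (cb e) g'"
  have yw: "y = vadd (vscale (cb e i0) x) (vadd (vscale (cb e j) y0) w)"
    unfolding w_def e lc_g lc_g2_split ..
  have wV: "w \<in> V" unfolding w_def using lc_vecs[of I' g' n "cb e", OF I'fin g'V] by blast
  have px: "polar Q x' x = 0" "polar Q x' y0 = 0" using orth_spn[OF x'(1)] by auto
  have pw: "polar Q x' y = polar Q x' w"
    unfolding yw using polar_add2[OF vscale_vecs[OF xV] vadd_vecs[OF vscale_vecs[OF y0V] wV] x'V]
      polar_add2[OF vscale_vecs[OF y0V] wV x'V] polar_scale2[OF xV x'V] polar_scale2[OF y0V x'V] px by simp
  have wn: "w \<noteq> zv" using y(3) pw polar_zero2[OF x'V] by auto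
  have ayw: "\<alpha> y \<le> \<alpha> w"
    unfolding w_def
  proof (rule al_lc_ge[of I' g', OF I'fin g'V])
    show "\<And>i. i \<in> I' \<Longrightarrow> g' i \<noteq> zv" using al_g'(1) by blast
    show "lc I' (cb e) g' \<noteq> zv" using wn w_def by simp
    fix k assume k: "k \<in> I'" "cb e k \<noteq> 0"
    have yy: "y = lc I (cb e) g2" unfolding e by (rule lc_g)
    have "k \<in> I" using k I'sub by blast
    have "\<alpha> y \<le> v (cb e k) + \<alpha> (g2 k)" unfolding yy by (rule splitf_D2[of I g2 k "cb e", OF split_g2 \<open>k \<in> I\<close> k(2)])
    then show "\<alpha> y \<le> v (cb e k) + \<alpha> (g' k)" using g2_I'[OF k(1)] by simp
  qed
  have lo: "\<alpha> x' + \<alpha> w + \<gamma> \<le> v (polar Q x' w)" using cA[OF x'V wV x'(2) wn] y(3) pw by simp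
  have "v (polar Q x' w) \<le> \<alpha> x' + \<alpha> w + \<gamma>" using y(4) pw ayw by (simp add: add_right_mono add_left_mono)
  then have "v (polar Q x' w) = \<alpha> x' + \<alpha> w + \<gamma>" using lo by simp
  moreover have "w \<in> spn I' g'" unfolding w_def by (rule spn_I)
  ultimately show "\<exists>y\<in>spn I' g'. y \<noteq> zv \<and> polar Q x' y \<noteq> 0 \<and> v (polar Q x' y) = \<alpha> x' + \<alpha> y + \<gamma>"
    using wn y(3) pw by auto
qed

lemma card_I': "card I' = card I - 2"
  unfolding I'_def using fin i0 jI ji by (simp add: card_Diff_subset)

end


definition hv :: "((nat \<Rightarrow> 'a) \<times> (nat \<Rightarrow> 'a)) list \<Rightarrow> nat \<Rightarrow> nat \<Rightarrow> 'a" where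
  "hv H i = (if even i then fst (H ! (i div 2)) else snd (H ! (i div 2)))"

lemma hv_0[simp]: "hv ((a,b)#H) 0 = a" by (simp add: hv_def)
lemma hv_1[simp]: "hv ((a,b)#H) (Suc 0) = b" by (simp add: hv_def)
lemma hv_SS[simp]: "hv ((a,b)#H) (Suc (Suc i)) = hv H i" by (simp add: hv_def)

lemma lc_hv_cons: "lc {..<2 * length ((a,b)#H)} c (hv ((a,b)#H)) =
   vadd (vscale (c 0) a) (vadd (vscale (c 1) b) (lc {..<2 * length H} (\<lambda>i. c (Suc (Suc i))) (hv H)))"
proof (rule ext)
  fix m
  have e: "2 * length ((a,b)#H) = Suc (Suc (2 * length H))" by simp
  show "lc {..<2 * length ((a,b)#H)} c (hv ((a,b)#H)) m = vadd (vscale (c 0) a) (vadd (vscale (c 1) b) (lc {..<2 * length H} (\<lambda>i. c (Suc (Suc i))) (hv H))) m"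
    unfolding lc_def e sum.lessThan_Suc_shift by (simp add: vadd_def vscale_def)
qed

context fctx begin

definition good :: "((nat \<Rightarrow> 'a) \<times> (nat \<Rightarrow> 'a)) list \<Rightarrow> nat set \<Rightarrow> (nat \<Rightarrow> nat \<Rightarrow> 'a) \<Rightarrow> bool" where
  "good H I g \<longleftrightarrow>
    (\<forall>k<length H. fst (H!k) \<in> V \<and> snd (H!k) \<in> V \<and> polar Q (fst (H!k)) (snd (H!k)) = 1 \<and>
        gen_cond v \<gamma> (Q (fst (H!k))) (Q (snd (H!k)))) \<and>
    (\<forall>i<2 * length H. \<forall>i'<2 * length H. i div 2 \<noteq> i' div 2 \<longrightarrow> polar Q (hv H i) (hv H i') = 0) \<and>
    (\<forall>i<2 * length H. hv H i \<in> spn I g) \<and>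
    spn I g \<subseteq> spn {..<2 * length H} (hv H) \<and>
    2 * length H = card I"

lemma decomp: "splitf I g \<Longrightarrow> cspan I g \<Longrightarrow> \<exists>H. good H I g"
proof (induction "card I" arbitrary: I g rule: less_induct)
  case less
  show ?case
  proof (cases "I = {}")
    case True
    have "spn I g \<subseteq> spn {..<2 * length ([]::((nat \<Rightarrow> 'a) \<times> (nat \<Rightarrow> 'a)) list)} (hv [])"
      unfolding True spn_def by simp
    then have "good [] I g" unfolding good_def using True by simp
    then show ?thesis by blast
  next
    case False
    then obtain i0 where i0: "i0 \<in> I" by blast
    obtain j where j: "j \<in> I" "j \<noteq> i0" "polar Q (g i0) (g j) \<noteq> 0" "v (polar Q (g i0) (g j)) = \<alpha> (g i0) + \<alpha> (g j) + \<gamma>"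
      using step_pair[OF less.prems i0] by blast
    interpret st: stepctx v \<gamma> n Q \<alpha> I g i0 j
      by unfold_locales (use less.prems i0 j in auto)
    have cI: "card st.I' < card I" using st.card_I' st.fin i0 j
      by (metis False card_gt_0_iff diff_less zero_less_numeral)
    obtain H' where H': "good H' st.I' st.g'" using less.hyps[OF cI st.split_g' st.cspan'] by blast
    define H where "H = (st.x, st.y0) # H'"
    have G1: "\<forall>k<length H'. fst (H'!k) \<in> V \<and> snd (H'!k) \<in> V \<and> polar Q (fst (H'!k)) (snd (H'!k)) = 1 \<and>
        gen_cond v \<gamma> (Q (fst (H'!k))) (Q (snd (H'!k)))" using H' unfolding good_def by blast
    have G2: "\<forall>i<2 * length H'. \<forall>i'<2 * length H'. i div 2 \<noteq> i' div 2 \<longrightarrow> polar Q (hv H' i) (hv H' i') = 0"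
      using H' unfolding good_def by blast
    have G3: "\<forall>i<2 * length H'. hv H' i \<in> spn st.I' st.g'" using H' unfolding good_def by blast
    have G4: "spn st.I' st.g' \<subseteq> spn {..<2 * length H'} (hv H')" using H' unfolding good_def by blast
    have G5: "2 * length H' = card st.I'" using H' unfolding good_def by blast
    have P1: "\<forall>k<length H. fst (H!k) \<in> V \<and> snd (H!k) \<in> V \<and> polar Q (fst (H!k)) (snd (H!k)) = 1 \<and>
        gen_cond v \<gamma> (Q (fst (H!k))) (Q (snd (H!k)))"
    proof (intro allI impI)
      fix k assume k: "k < length H"
      show "fst (H!k) \<in> V \<and> snd (H!k) \<in> V \<and> polar Q (fst (H!k)) (snd (H!k)) = 1 \<and> gen_cond v \<gamma> (Q (fst (H!k))) (Q (snd (H!k)))"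
      proof (cases k)
        case 0 then show ?thesis unfolding H_def using st.xV st.y0V st.pxy st.gen_xy by simp
      next
        case (Suc k') then show ?thesis using G1 k unfolding H_def by simp
      qed
    qed
    have hvI: "hv H i \<in> spn I g" if i: "i < 2 * length H" for i
    proof -
      consider "i = 0" | "i = 1" | i'' where "i = Suc (Suc i'')" by (metis One_nat_def not0_implies_Suc)
      then show ?thesis
      proof cases
        case 1 then show ?thesis unfolding H_def using st.x_spn by simp
      next
        case 2 then show ?thesis unfolding H_def using st.y0_spn by simp
      next
        case 3
        then have "i'' < 2 * length H'" using i unfolding H_def by simp
        then have "hv H' i'' \<in> spn st.I' st.g'" using G3 by blast
        then show ?thesis using 3 st.spn'_sub unfolding H_def by auto
      qed
    qed
    have orthH': "polar Q z (hv H' i) = 0 \<and> polar Q (hv H' i) z = 0" if "z = st.x \<or> z = st.y0" "i < 2 * length H'" for z i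
    proof -
      have "hv H' i \<in> spn st.I' st.g'" using G3 that by blast
      then have "polar Q (hv H' i) st.x = 0" "polar Q (hv H' i) st.y0 = 0" using st.orth_spn by auto
      then show ?thesis using that polar_sym by metis
    qed
    have P2: "\<forall>i<2 * length H. \<forall>i'<2 * length H. i div 2 \<noteq> i' div 2 \<longrightarrow> polar Q (hv H i) (hv H i') = 0"
    proof (intro allI impI)
      fix i i' assume i: "i < 2 * length H" and i': "i' < 2 * length H" and d: "i div 2 \<noteq> i' div 2"
      have cases: "\<And>k. k < 2 * length H \<Longrightarrow> (k = 0 \<and> hv H k = st.x) \<or> (k = 1 \<and> hv H k = st.y0) \<or>
          (\<exists>k''. k = Suc (Suc k'') \<and> k'' < 2 * length H' \<and> hv H k = hv H' k'')"
      proof -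
        fix k assume k: "k < 2 * length H"
        consider "k = 0" | "k = 1" | k'' where "k = Suc (Suc k'')" by (metis One_nat_def not0_implies_Suc)
        then show "(k = 0 \<and> hv H k = st.x) \<or> (k = 1 \<and> hv H k = st.y0) \<or>
          (\<exists>k''. k = Suc (Suc k'') \<and> k'' < 2 * length H' \<and> hv H k = hv H' k'')"
          by cases (use k in \<open>auto simp: H_def\<close>)
      qed
      show "polar Q (hv H i) (hv H i') = 0"
        using cases[OF i] cases[OF i']
      proof (elim disjE exE conjE)
      qed (use d orthH' G2 in auto)
    qed
    have P4: "spn I g \<subseteq> spn {..<2 * length H} (hv H)"
    proof
      fix z assume "z \<in> spn I g"
      then obtain p q w where w: "w \<in> spn st.I' st.g'" "z = vadd (vscale p st.x) (vadd (vscale q st.y0) w)"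
        using st.decomp_spn by blast
      obtain c where c: "w = lc {..<2 * length H'} c (hv H')" using w(1) G4 unfolding spn_def by blast
      define c2 where "c2 i = (if i = 0 then p else if i = 1 then q else c (i - 2))" for i
      have "lc {..<2 * length H} c2 (hv H) = z"
        unfolding H_def lc_hv_cons w(2) c by (simp add: c2_def)
      then show "z \<in> spn {..<2 * length H} (hv H)" using spn_I by metis
    qed
    have "card {i0, j} \<le> card I" by (rule card_mono[OF st.fin]) (use i0 j in auto)
    then have c2: "2 \<le> card I" using j(2) by simp
    have P5: "2 * length H = card I" unfolding H_def using G5 st.card_I' c2 by simp
    have "good H I g" unfolding good_def using P1 P2 hvI P4 P5 by blast
    then show ?thesis by blast
  qed
qed

end


definition qmap :: "((nat \<Rightarrow> 'a::field) \<Rightarrow> 'a) \<Rightarrow> ((nat \<Rightarrow> 'a) \<times> (nat \<Rightarrow> 'a)) list \<Rightarrow> ('a \<times> 'a) list" where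
  "qmap Q H = map (\<lambda>p. (Q (fst p), Q (snd p))) H"

lemma sbQ_cons: "sbQ ((a,b)#L) c = bq a b (c 0) (c 1) + sbQ L (\<lambda>i. c (Suc (Suc i)))"
  unfolding sbQ_def by (simp add: sum.lessThan_Suc_shift del: sum.lessThan_Suc)

context qctx begin

lemma Q_lc_hv:
  assumes "\<forall>k<length H. fst (H!k) \<in> V \<and> snd (H!k) \<in> V \<and> polar Q (fst (H!k)) (snd (H!k)) = 1"
    and "\<forall>i<2 * length H. \<forall>i'<2 * length H. i div 2 \<noteq> i' div 2 \<longrightarrow> polar Q (hv H i) (hv H i') = 0"
  shows "Q (lc {..<2 * length H} c (hv H)) = sbQ (qmap Q H) c"
  using assms
proof (induction H arbitrary: c)
  case Nil then show ?case by (simp add: Q_zero sbQ_def qmap_def)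
next
  case (Cons p H)
  obtain a b where p: "p = (a,b)" by (cases p)
  have ab: "a \<in> V" "b \<in> V" "polar Q a b = 1" using Cons.prems(1) p by auto
  have H1: "\<forall>k<length H. fst (H!k) \<in> V \<and> snd (H!k) \<in> V \<and> polar Q (fst (H!k)) (snd (H!k)) = 1"
    using Cons.prems(1) by auto
  have H2: "\<forall>i<2 * length H. \<forall>i'<2 * length H. i div 2 \<noteq> i' div 2 \<longrightarrow> polar Q (hv H i) (hv H i') = 0"
  proof (intro allI impI)
    fix i i' assume "i < 2 * length H" "i' < 2 * length H" "i div 2 \<noteq> i' div 2"
    then have "Suc (Suc i) < 2 * length (p#H)" "Suc (Suc i') < 2 * length (p#H)" "Suc (Suc i) div 2 \<noteq> Suc (Suc i') div 2"
      by auto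
    then show "polar Q (hv H i) (hv H i') = 0" using Cons.prems(2) p by fastforce
  qed
  have hvV: "\<And>i. i < 2 * length H \<Longrightarrow> hv H i \<in> V" using H1 unfolding hv_def
    by (metis less_mult_imp_div_less mult.commute)
  define W where "W = lc {..<2 * length H} (\<lambda>i. c (Suc (Suc i))) (hv H)"
  have WV: "W \<in> V" unfolding W_def by (rule lc_vecs) (use hvV in auto)
  have oa: "polar Q a W = 0"
  proof -
    have "polar Q a W = (\<Sum>i<2 * length H. c (Suc (Suc i)) * polar Q a (hv H i))"
      unfolding W_def by (rule polar_lc2) (use hvV ab in auto)
    also have "\<dots> = 0"
    proof (rule sum.neutral, intro ballI)
      fix i assume i: "i \<in> {..<2 * length H}"
      have "polar Q (hv (p#H) 0) (hv (p#H) (Suc (Suc i))) = 0" using Cons.prems(2) i by auto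
      then show "c (Suc (Suc i)) * polar Q a (hv H i) = 0" using p by simp
    qed
    finally show ?thesis .
  qed
  have ob: "polar Q b W = 0"
  proof -
    have "polar Q b W = (\<Sum>i<2 * length H. c (Suc (Suc i)) * polar Q b (hv H i))"
      unfolding W_def by (rule polar_lc2) (use hvV ab in auto)
    also have "\<dots> = 0"
    proof (rule sum.neutral, intro ballI)
      fix i assume i: "i \<in> {..<2 * length H}"
      have "polar Q (hv (p#H) 1) (hv (p#H) (Suc (Suc i))) = 0" using Cons.prems(2) i by auto
      then show "c (Suc (Suc i)) * polar Q b (hv H i) = 0" using p by simp
    qed
    finally show ?thesis .
  qed
  have IH: "Q W = sbQ (qmap Q H) (\<lambda>i. c (Suc (Suc i)))" unfolding W_def using Cons.IH[OF H1 H2] .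
  have sA: "vscale (c 0) a \<in> V" "vscale (c 1) b \<in> V" using ab by auto
  have pab: "polar Q (vscale (c 0) a) (vscale (c 1) b) = c 0 * c 1"
    using polar_scale1[OF ab(1) sA(2)] polar_scale2[OF ab(2) ab(1)] ab(3) by simp
  have paw: "polar Q (vscale (c 0) a) W = 0" using polar_scale1[OF ab(1) WV] oa by simp
  have pbw: "polar Q (vscale (c 1) b) W = 0" using polar_scale1[OF ab(2) WV] ob by simp
  have pA: "polar Q (vscale (c 0) a) (vadd (vscale (c 1) b) W) = c 0 * c 1"
    using polar_add2[OF sA(2) WV sA(1)] pab paw by simp
  have "Q (vadd (vscale (c 0) a) (vadd (vscale (c 1) b) W)) =
        c 0 ^ 2 * Q a + (c 1 ^ 2 * Q b + Q W) + c 0 * c 1"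
    unfolding Q_add[of "vscale (c 0) a"] Q_add[of "vscale (c 1) b"] Q_scale[OF ab(1)] Q_scale[OF ab(2)] pA pbw
    by simp
  also have "\<dots> = bq (Q a) (Q b) (c 0) (c 1) + Q W" by (simp add: bq_def algebra_simps)
  finally show ?case unfolding p lc_hv_cons W_def[symmetric] qmap_def
    using IH by (simp add: sbQ_cons qmap_def)
qed

end



context fctx begin

lemma lc_diff: "(\<lambda>j. lc I c h j - lc I c' h j) = lc I (\<lambda>i. c i - c' i) h"
  unfolding lc_def by (simp add: fun_eq_iff sum_subtractf algebra_simps)

lemma forward_iso:
  assumes cC: "\<forall>x\<in>V. x \<noteq> zv \<longrightarrow> (\<exists>y\<in>V. y \<noteq> zv \<and> polar Q x y \<noteq> 0 \<and> v (polar Q x y) = \<alpha> x + \<alpha> y + \<gamma>)"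
  shows "\<exists>L. (\<forall>(a,b)\<in>set L. gen_cond v \<gamma> a b) \<and> isometric (n,Q) (sum_binf L)"
proof -
  obtain e :: "nat \<Rightarrow> nat \<Rightarrow> 'a" where e1: "\<forall>i<n. e i \<in> V"
    and e2: "bij_betw (\<lambda>c j. \<Sum>i<n. c i * e i j) V V"
    and e3: "\<forall>c\<in>V. c \<noteq> zv \<longrightarrow> \<alpha> (\<lambda>j. \<Sum>i<n. c i * e i j) = Min {v (c i) + \<alpha> (e i) |i. i < n \<and> c i \<noteq> 0}"
    using vn unfolding vnorm_def by blast
  have lce: "(\<lambda>j. \<Sum>i<n. c i * e i j) = lc {..<n} c e" for c unfolding lc_def by simp
  have bij: "bij_betw (\<lambda>c. lc {..<n} c e) V V" using e2 unfolding lce .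
  have zvV: "zv \<in> V" by (simp add: vecs_def)
  have lzv: "lc {..<n} zv e = zv" by (simp add: lc_def)
  have sp: "splitf {..<n} e"
    unfolding splitf_def
  proof (intro conjI allI impI ballI)
    show "finite {..<n}" by simp
    show "\<And>i. i \<in> {..<n} \<Longrightarrow> e i \<in> V" using e1 by auto
    fix c :: "nat \<Rightarrow> 'a" assume c: "\<exists>i\<in>{..<n}. c i \<noteq> 0"
    define c0 where "c0 = restr n c"
    have c0V: "c0 \<in> V" unfolding c0_def by (rule restr_vecs)
    have c0n: "c0 \<noteq> zv" using c unfolding c0_def restr_def by (auto simp: fun_eq_iff)
    have eq: "lc {..<n} c e = lc {..<n} c0 e" by (rule lc_cong) (simp add: c0_def restr_def)
    have "lc {..<n} c0 e \<noteq> lc {..<n} zv e"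
      using bij c0V zvV c0n unfolding bij_betw_def inj_on_def by blast
    then show "lc {..<n} c e \<noteq> zv" unfolding eq lzv .
    fix i assume i: "i \<in> {..<n}" "c i \<noteq> 0"
    have "\<alpha> (lc {..<n} c0 e) = Min {v (c0 i) + \<alpha> (e i) |i. i < n \<and> c0 i \<noteq> 0}"
      using e3 c0V c0n unfolding lce by blast
    also have "\<dots> \<le> v (c0 i) + \<alpha> (e i)" by (rule Min_le) (use i in \<open>auto simp: c0_def restr_def\<close>)
    finally show "\<alpha> (lc {..<n} c e) \<le> v (c i) + \<alpha> (e i)" unfolding eq using i by (simp add: c0_def restr_def)
  qed
  have spnV: "spn {..<n} e = V"
  proof
    show "spn {..<n} e \<subseteq> V" using spn_vecs[OF sp] by blast
    show "V \<subseteq> spn {..<n} e"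
    proof
      fix z :: "nat \<Rightarrow> 'a" assume "z \<in> V"
      then obtain c where "c \<in> V" "z = lc {..<n} c e" using bij unfolding bij_betw_def by blast
      then show "z \<in> spn {..<n} e" using spn_I by simp
    qed
  qed
  have cs: "cspan {..<n} e" unfolding cspan_def spnV using cC by blast
  obtain H where H: "good H {..<n} e" using decomp[OF sp cs] by blast
  define m where "m = length H"
  have G1: "\<forall>k<length H. fst (H!k) \<in> V \<and> snd (H!k) \<in> V \<and> polar Q (fst (H!k)) (snd (H!k)) = 1 \<and>
        gen_cond v \<gamma> (Q (fst (H!k))) (Q (snd (H!k)))" using H unfolding good_def by blast
  have G2: "\<forall>i<2 * length H. \<forall>i'<2 * length H. i div 2 \<noteq> i' div 2 \<longrightarrow> polar Q (hv H i) (hv H i') = 0"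
    using H unfolding good_def by blast
  have G4: "spn {..<n} e \<subseteq> spn {..<2 * length H} (hv H)" using H unfolding good_def by blast
  have G5: "2 * length H = n" using H unfolding good_def by simp
  have hvV: "\<And>i. i < 2 * length H \<Longrightarrow> hv H i \<in> V" using G1 unfolding hv_def
    by (metis less_mult_imp_div_less mult.commute)
  define F where "F c = lc {..<2 * length H} c (hv H)" for c
  have FV: "F c \<in> V" for c unfolding F_def by (rule lc_vecs) (use hvV in auto)
  have Fz: "d = zv" if d: "d \<in> vecs (2 * length H)" "F d = zv" for d
  proof (rule ext)
    fix i
    show "d i = 0"
    proof (cases "i < 2 * length H")
      case False then show ?thesis using d by (simp add: vecs_def)
    next
      case True
      define k where "k = i div 2"
      have k: "k < length H" "2*k < 2 * length H" "2*k+1 < 2 * length H" using True unfolding k_def by (simp_all add: less_mult_imp_div_less, presburger)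
      let ?a = "fst (H!k)" and ?b = "snd (H!k)"
      have ab: "?a \<in> V" "?b \<in> V" "polar Q ?a ?b = 1" "gen_cond v \<gamma> (Q ?a) (Q ?b)" using G1 k(1) by auto
      have hk: "hv H (2*k) = ?a" "hv H (2*k+1) = ?b" unfolding hv_def by simp_all
      have pol: "polar Q (F d) z = d (2*k) * polar Q ?a z + d (2*k+1) * polar Q ?b z"
        if z: "z \<in> V" "\<And>i'. i' < 2 * length H \<Longrightarrow> i' div 2 \<noteq> k \<Longrightarrow> polar Q (hv H i') z = 0" for z
      proof -
        have "polar Q (F d) z = (\<Sum>i'<2 * length H. d i' * polar Q (hv H i') z)"
          unfolding F_def by (rule polar_lc1) (use hvV z in auto)
        also have "\<dots> = (\<Sum>i'\<in>{2*k, 2*k+1}. d i' * polar Q (hv H i') z)"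
        proof (rule sum.mono_neutral_right)
          show "\<forall>i'\<in>{..<2 * length H} - {2*k, 2*k+1}. d i' * polar Q (hv H i') z = 0"
          proof
            fix i' assume i': "i' \<in> {..<2 * length H} - {2*k, 2*k+1}"
            have "i' div 2 \<noteq> k"
            proof
              assume "i' div 2 = k"
              then have "i' = 2*k \<or> i' = 2*k+1" by presburger
              then show False using i' by auto
            qed
            then show "d i' * polar Q (hv H i') z = 0" using z(2) i' by auto
          qed
        qed (use k in auto)
        also have "\<dots> = d (2*k) * polar Q ?a z + d (2*k+1) * polar Q ?b z" using hk by simp
        finally show ?thesis .
      qed
      have d2: "(2*k) div 2 = k" "(2*k+1) div 2 = k" by presburger+
      have o1: "polar Q (hv H i') ?a = 0" if "i' < 2 * length H" "i' div 2 \<noteq> k" for i'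
      proof -
        have "polar Q (hv H i') (hv H (2*k)) = 0" using G2 k(2) that d2 by simp
        then show ?thesis using hk by simp
      qed
      have o2: "polar Q (hv H i') ?b = 0" if "i' < 2 * length H" "i' div 2 \<noteq> k" for i'
      proof -
        have "polar Q (hv H i') (hv H (2*k+1)) = 0" using G2 k(3) that d2 by simp
        then show ?thesis using hk by simp
      qed
      have e1: "d (2*k) * polar Q ?a ?a + d (2*k+1) * polar Q ?b ?a = 0"
        using pol[OF ab(1) o1] d(2) polar_zero1[OF ab(1)] by simp
      have e2: "d (2*k) * polar Q ?a ?b + d (2*k+1) * polar Q ?b ?b = 0"
        using pol[OF ab(2) o2] d(2) polar_zero1[OF ab(2)] by simp
      have pba: "polar Q ?b ?a = 1" using ab(3) polar_sym by metis
      have D: "4 * Q ?a * Q ?b - 1 \<noteq> 0" using gen_D[OF ab(4)] .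
      have e1': "d (2*k) * (2 * Q ?a) + d (2*k+1) = 0" using e1 pba polar_self[OF ab(1)] by simp
      have e2': "d (2*k) + d (2*k+1) * (2 * Q ?b) = 0" using e2 ab(3) polar_self[OF ab(2)] by simp
      have "d (2*k+1) = - (d (2*k) * (2 * Q ?a))" using e1' by (simp add: eq_neg_iff_add_eq_0 add.commute)
      then have "d (2*k) * (4 * Q ?a * Q ?b - 1) = 0" using e2' by (simp add: algebra_simps)
      then have z0: "d (2*k) = 0" using D by simp
      then have z1: "d (2*k+1) = 0" using e1' by simp
      have "i = 2*k \<or> i = 2*k+1" unfolding k_def by presburger
      then show ?thesis using z0 z1 by auto
    qed
  qed
  have inj: "inj_on F (vecs (2 * length H))"
  proof (rule inj_onI)
    fix c c' :: "nat \<Rightarrow> 'a" assume c: "c \<in> vecs (2 * length H)" "c' \<in> vecs (2 * length H)" "F c = F c'"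
    have "F (\<lambda>i. c i - c' i) = zv" using c(3) unfolding F_def lc_diff[symmetric] by simp
    moreover have "(\<lambda>i. c i - c' i) \<in> vecs (2 * length H)" using c by (simp add: vecs_def)
    ultimately have "(\<lambda>i. c i - c' i) = zv" using Fz by blast
    then show "c = c'" by (simp add: fun_eq_iff)
  qed
  have img: "F ` vecs (2 * length H) = V"
  proof
    show "F ` vecs (2 * length H) \<subseteq> V" using FV by blast
    show "V \<subseteq> F ` vecs (2 * length H)"
    proof
      fix z :: "nat \<Rightarrow> 'a" assume "z \<in> V"
      then have "z \<in> spn {..<2 * length H} (hv H)" using G4 spnV by blast
      then obtain c where c: "z = lc {..<2 * length H} c (hv H)" unfolding spn_def by blast
      have "z = F (restr (2 * length H) c)" unfolding c F_def by (rule lc_cong) (simp add: restr_def)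
      then show "z \<in> F ` vecs (2 * length H)" using restr_vecs by blast
    qed
  qed
  have bijF: "bij_betw F (vecs (2 * length H)) V" unfolding bij_betw_def using inj img by blast
  have addF: "F (vadd c c') = vadd (F c) (F c')" for c c'
    unfolding F_def lc_def vadd_def by (simp add: fun_eq_iff sum.distrib algebra_simps)
  have scF: "F (vscale a c) = vscale a (F c)" for a c
    unfolding F_def lc_def vscale_def by (simp add: fun_eq_iff sum_distrib_left algebra_simps)
  have QF: "Q (F c) = sbQ (qmap Q H) c" for c
    unfolding F_def by (rule Q_lc_hv) (use G1 G2 in auto)
  have iso: "isometric (sum_binf (qmap Q H)) (n, Q)"
    unfolding sum_binf_eq isometric_eq
    apply (rule exI[of _ F])
    using bijF addF scF QF G5 by (simp add: qmap_def)
  have gen: "\<forall>(a,b)\<in>set (qmap Q H). gen_cond v \<gamma> a b"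
  proof
    fix p assume "p \<in> set (qmap Q H)"
    then obtain i where i: "i < length H" "p = (Q (fst (H!i)), Q (snd (H!i)))"
      unfolding qmap_def by (auto simp: in_set_conv_nth)
    then show "case p of (a,b) \<Rightarrow> gen_cond v \<gamma> a b" using G1 by simp
  qed
  show ?thesis using gen iso_sym[OF iso] by blast
qed

end


lemma gen_mono: "gen_cond v g a b \<Longrightarrow> g \<le> e \<Longrightarrow> gen_cond v e a b"
  unfolding gen_cond_def by (meson add_mono neg_le_iff_le order_trans)

theorem corollary4p4:
  fixes v :: "'a::field \<Rightarrow> 'g::linordered_ab_group_add" and \<epsilon> :: 'g
  assumes "valuation v"
    and "divisible_group (UNIV :: 'g set)"
    and "0 \<le> \<epsilon>"
    and "(2::'a) = 0 \<or> \<epsilon> < v 2"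
  shows "(\<forall>a b. gen_cond v \<epsilon> a b \<longrightarrow> nonsingular (binf a b)) \<and>
         (\<forall>S :: 'a qspace. nonsingular S \<longrightarrow> (in_W_eps v \<epsilon> S \<longleftrightarrow> in_generated v \<epsilon> S))"
proof -
  interpret C: cctx v \<epsilon> by unfold_locales (use assms in auto)
  have P1: "\<forall>a b. gen_cond v \<epsilon> a b \<longrightarrow> nonsingular (binf a b)"
  proof (intro allI impI)
    fix a b assume g: "gen_cond v \<epsilon> a b"
    show "nonsingular (binf a b)" unfolding binf_eq by (rule nonsing_sb) (use C.gen_D[OF g] in simp)
  qed
  have P2: "in_W_eps v \<epsilon> S \<longleftrightarrow> in_generated v \<epsilon> S" if ns: "nonsingular S" for S :: "'a qspace"
  proof
    assume "in_generated v \<epsilon> S"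
    then show "in_W_eps v \<epsilon> S" by (rule C.backward[OF assms(2)])
  next
    assume "in_W_eps v \<epsilon> S"
    then obtain T \<alpha> \<gamma> where T: "nonsingular T" "witt_equiv S T" "\<gamma> \<le> \<epsilon>" "compatible v T \<alpha> \<gamma>"
      unfolding in_W_eps_def by blast
    obtain n Q where TQ: "T = (n, Q)" by (cases T)
    have cp: "0 \<le> \<gamma>" "vnorm v n \<alpha>"
      "\<forall>x\<in>vecs n. \<forall>y\<in>vecs n. x \<noteq> (\<lambda>_. 0) \<and> y \<noteq> (\<lambda>_. 0) \<and> polar Q x y \<noteq> 0 \<longrightarrow> \<alpha> x + \<alpha> y + \<gamma> \<le> v (polar Q x y)"
      "\<forall>x\<in>vecs n. x \<noteq> (\<lambda>_. 0) \<and> Q x \<noteq> 0 \<longrightarrow> \<alpha> x + \<alpha> x \<le> v (Q x)"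
      "\<forall>x\<in>vecs n. x \<noteq> (\<lambda>_. 0) \<longrightarrow> (\<exists>y\<in>vecs n. y \<noteq> (\<lambda>_. 0) \<and> polar Q x y \<noteq> 0 \<and> v (polar Q x y) = \<alpha> x + \<alpha> y + \<gamma>)"
      using T(4) unfolding TQ compatible_def by auto
    have qf: "is_qform (n, Q)" using T(1) unfolding TQ nonsingular_def by blast
    interpret F: fctx v \<gamma> n Q \<alpha>
    proof unfold_locales
      show "valuation v" by (rule assms(1))
      show "0 \<le> \<gamma>" by (rule cp(1))
      show "(2::'a) = 0 \<or> \<gamma> < v 2" using assms(4) T(3) by auto
      show "is_qform (n, Q)" by (rule qf)
      show "vnorm v n \<alpha>" by (rule cp(2))
    qed (use cp(3,4) in auto)
    obtain L where L: "\<forall>(a,b)\<in>set L. gen_cond v \<gamma> a b" "isometric (n,Q) (sum_binf L)"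
      using F.forward_iso cp(5) by blast
    obtain k l where kl: "witt_equiv (osum S (sum_binf (R0 k))) (sum_binf (L @ R0 l))"
      using forward_plumbing[OF T(2) L(2)[folded TQ]] by blast
    have gP: "\<forall>(a,b)\<in>set (L @ R0 l). gen_cond v \<epsilon> a b"
    proof
      fix p assume "p \<in> set (L @ R0 l)"
      then consider "p \<in> set L" | "p = (0,0)" by (auto split: if_splits)
      then show "case p of (a,b) \<Rightarrow> gen_cond v \<epsilon> a b"
      proof cases
        case 1
        then have "case p of (a,b) \<Rightarrow> gen_cond v \<gamma> a b" by (rule bspec[OF L(1)])
        then show ?thesis using gen_mono[OF _ T(3)] by (simp add: case_prod_beta)
      next
        case 2 then show ?thesis by (simp add: gen_cond_def)
      qed
    qed
    have gN: "\<forall>(a,b)\<in>set (R0 k :: ('a \<times> 'a) list). gen_cond v \<epsilon> a b" by (simp add: gen_cond_def)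
    show "in_generated v \<epsilon> S" unfolding in_generated_def using gP gN kl by blast
  qed
  show ?thesis using P1 P2 by blast
qed


end
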